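(* Assume $\mathbb{C}_v$ has residue characteristic $0$, fix $c\in\mathbb{C}_v$ with $0<|c|<1$, and let $f(z)=(z+c)(z+1)/z$. Then there exists a type I point $b\in\mathcal{J}_f\cap\mathbb{C}_v$ such that $(f^n)^{\natural}(b)\le|c|^{-1}n$ for every $n\in\mathbb{N}$.
   Context: $\mathbb{C}_v$ is an algebraically closed field of characteristic zero, complete with respect to a nontrivial non-archimedean absolute value. $\mathbb{P}^1_{\mathrm{Berk}}$ is its Berkovich projective line. $\mathcal{J}_f$ is the Berkovich Julia set (complement of the set of points having a neighborhood $V$ with $\bigcup_{n\ge1}f^n(V)$ omitting infinitely many points). $f^{\natural}$ is the spherical derivative; at $x\in\mathbb{C}_v$ with $f(x)\in\mathbb{C}_v$ it equals $|f'(x)|\max\{1,|x|^2\}/\max\{1,|f(x)|^2\}$, and in general $f^{\natural}(\zeta)=\lim_{\zeta'\to\zeta}\|f(\zeta),f(\zeta')\|/\|\zeta,\zeta'\|$ with $\|\cdot,\cdot\|$ the spherical kernel extending the chordal metric $\rho(z,w)=|z-w|/(\max\{1,|z|\}\max\{1,|w|\})$. *)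

theory Defs
  imports "HOL-Analysis.Analysis" "HOL-Computational_Algebra.Polynomial"
begin

definition nonarch_abs :: "('a::field \<Rightarrow> real) \<Rightarrow> bool" where
  "nonarch_abs absv \<longleftrightarrow>
     (\<forall>x. 0 \<le> absv x) \<and> (\<forall>x. absv x = 0 \<longleftrightarrow> x = 0) \<and>
     (\<forall>x y. absv (x * y) = absv x * absv y) \<and>
     (\<forall>x y. absv (x + y) \<le> max (absv x) (absv y))"

definition nontrivial_abs :: "('a::field \<Rightarrow> real) \<Rightarrow> bool" where
  "nontrivial_abs absv \<longleftrightarrow> (\<exists>x. absv x \<noteq> 0 \<and> absv x \<noteq> 1)"

definition complete_abs :: "('a::field \<Rightarrow> real) \<Rightarrow> bool" where
  "complete_abs absv \<longleftrightarrow>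
     (\<forall>X :: nat \<Rightarrow> 'a.
        (\<forall>e>0. \<exists>N. \<forall>m\<ge>N. \<forall>n\<ge>N. absv (X m - X n) < e) \<longrightarrow>
        (\<exists>L. \<forall>e>0. \<exists>N. \<forall>n\<ge>N. absv (X n - L) < e))"

definition alg_closed :: "'a::field itself \<Rightarrow> bool" where
  "alg_closed _ \<longleftrightarrow> (\<forall>p :: 'a poly. 0 < degree p \<longrightarrow> (\<exists>x. poly p x = 0))"

text \<open>Residue field O/m (O = {|x| \<le> 1}, m = {|x| < 1}) has characteristic 0:
  no positive integer multiple of 1 lies in m.\<close>
definition residue_char_zero :: "('a::field \<Rightarrow> real) \<Rightarrow> bool" where
  "residue_char_zero absv \<longleftrightarrow> (\<forall>n::nat. 0 < n \<longrightarrow> \<not> absv (of_nat n) < 1)"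

definition Cv_field :: "('a::field_char_0 \<Rightarrow> real) \<Rightarrow> bool" where
  "Cv_field absv \<longleftrightarrow> nonarch_abs absv \<and> nontrivial_abs absv \<and> complete_abs absv
      \<and> alg_closed TYPE('a)"

text \<open>Points of the Berkovich affine line: multiplicative seminorms on C_v[T]
  extending the absolute value of C_v.\<close>
definition berk_seminorm :: "('a::field \<Rightarrow> real) \<Rightarrow> ('a poly \<Rightarrow> real) \<Rightarrow> bool" where
  "berk_seminorm absv \<zeta> \<longleftrightarrow>
     (\<forall>a. \<zeta> [:a:] = absv a) \<and> (\<forall>p. 0 \<le> \<zeta> p) \<and>
     (\<forall>p q. \<zeta> (p * q) = \<zeta> p * \<zeta> q) \<and>
     (\<forall>p q. \<zeta> (p + q) \<le> max (\<zeta> p) (\<zeta> q))"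

definition berkA1 :: "('a::field \<Rightarrow> real) \<Rightarrow> ('a poly \<Rightarrow> real) set" where
  "berkA1 absv = {\<zeta>. berk_seminorm absv \<zeta>}"

definition berkA1_top :: "('a::field \<Rightarrow> real) \<Rightarrow> ('a poly \<Rightarrow> real) topology" where
  "berkA1_top absv = topology_generated_by
      {{\<zeta> \<in> berkA1 absv. \<zeta> g \<in> U} | g U. open (U :: real set)}"

text \<open>Berkovich projective line = one-point compactification of the affine line;
  None is the point at infinity.\<close>
definition berkP1 :: "('a::field \<Rightarrow> real) \<Rightarrow> ('a poly \<Rightarrow> real) option set" where
  "berkP1 absv = insert None (Some ` berkA1 absv)"

definition berkP1_open :: "('a::field \<Rightarrow> real) \<Rightarrow> ('a poly \<Rightarrow> real) option set \<Rightarrow> bool" where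
  "berkP1_open absv U \<longleftrightarrow> U \<subseteq> berkP1 absv \<and>
     openin (berkA1_top absv) (Some -` U) \<and>
     (None \<in> U \<longrightarrow> compactin (berkA1_top absv) (berkA1 absv - Some -` U))"

definition typeI :: "('a::field \<Rightarrow> real) \<Rightarrow> 'a \<Rightarrow> ('a poly \<Rightarrow> real)" where
  "typeI absv a = (\<lambda>g. absv (poly g a))"

section \<open>Action of a rational map phi = P/Q (P, Q coprime, Q nonzero)\<close>

text \<open>Numerator of g(P/Q): Q^(deg g) * g(P/Q).\<close>
definition hom_compose :: "'a::field poly \<Rightarrow> 'a poly \<Rightarrow> 'a poly \<Rightarrow> 'a poly" where
  "hom_compose g P Q = (\<Sum>i\<le>degree g. smult (coeff g i) (P ^ i * Q ^ (degree g - i)))"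

definition rat_at_infty :: "'a::field poly \<Rightarrow> 'a poly \<Rightarrow> 'a" where
  "rat_at_infty P Q = (if degree P = degree Q then lead_coeff P / lead_coeff Q else 0)"

text \<open>[g]_{phi(zeta)} = [g o phi]_zeta.\<close>
definition berk_map :: "('a::field \<Rightarrow> real) \<Rightarrow> 'a poly \<Rightarrow> 'a poly
                        \<Rightarrow> ('a poly \<Rightarrow> real) option \<Rightarrow> ('a poly \<Rightarrow> real) option" where
  "berk_map absv P Q z = (case z of
      None \<Rightarrow> (if degree P > degree Q then None
               else Some (typeI absv (rat_at_infty P Q)))
    | Some \<zeta> \<Rightarrow> (if \<zeta> Q = 0 then None
               else Some (\<lambda>g. \<zeta> (hom_compose g P Q) / \<zeta> Q ^ degree g)))"

definition berk_julia :: "('a::field \<Rightarrow> real) \<Rightarrow> 'a poly \<Rightarrow> 'a poly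
                          \<Rightarrow> ('a poly \<Rightarrow> real) option set" where
  "berk_julia absv P Q = berkP1 absv -
     {x \<in> berkP1 absv. \<exists>V. berkP1_open absv V \<and> x \<in> V \<and>
        infinite (berkP1 absv - (\<Union>n\<in>{1..}. (berk_map absv P Q ^^ n) ` V))}"

section \<open>Classical projective line P^1(C_v) (None = infinity), chordal metric,
  spherical derivative\<close>

definition rat_map :: "'a::field poly \<Rightarrow> 'a poly \<Rightarrow> 'a option \<Rightarrow> 'a option" where
  "rat_map P Q z = (case z of
      None \<Rightarrow> (if degree P > degree Q then None else Some (rat_at_infty P Q))
    | Some x \<Rightarrow> (if poly Q x = 0 then None else Some (poly P x / poly Q x)))"

definition chordal :: "('a::field \<Rightarrow> real) \<Rightarrow> 'a option \<Rightarrow> 'a option \<Rightarrow> real" where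
  "chordal absv z w = (case (z, w) of
      (None, None) \<Rightarrow> 0
    | (None, Some y) \<Rightarrow> 1 / max 1 (absv y)
    | (Some x, None) \<Rightarrow> 1 / max 1 (absv x)
    | (Some x, Some y) \<Rightarrow> absv (x - y) / (max 1 (absv x) * max 1 (absv y)))"

definition chordal_at :: "('a::field \<Rightarrow> real) \<Rightarrow> 'a option \<Rightarrow> 'a option filter" where
  "chordal_at absv x = (INF e\<in>{0<..}. principal {y. y \<noteq> x \<and> chordal absv x y < e})"

definition sph_deriv :: "('a::field \<Rightarrow> real) \<Rightarrow> ('a option \<Rightarrow> 'a option) \<Rightarrow> 'a option \<Rightarrow> real" where
  "sph_deriv absv g x = Lim (chordal_at absv x) (\<lambda>y. chordal absv (g x) (g y) / chordal absv x y)"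

end

theory Submission
  imports Defs
begin


locale cv =
  fixes absv :: "'a::field_char_0 \<Rightarrow> real" and c :: 'a
  assumes Cv: "Cv_field absv" and rc: "residue_char_zero absv"
    and c0: "0 < absv c" and c1: "absv c < 1"
begin

lemma av_nonneg[simp]: "0 \<le> absv x"
  using Cv unfolding Cv_field_def nonarch_abs_def by blast
lemma av_eq_0[simp]: "absv x = 0 \<longleftrightarrow> x = 0"
  using Cv unfolding Cv_field_def nonarch_abs_def by blast
lemma av_mult[simp]: "absv (x * y) = absv x * absv y"
  using Cv unfolding Cv_field_def nonarch_abs_def by blast
lemma av_ultra: "absv (x + y) \<le> max (absv x) (absv y)"
  using Cv unfolding Cv_field_def nonarch_abs_def by blast
lemma av_0[simp]: "absv 0 = 0" by simp
lemma av_pos[simp]: "0 < absv x \<longleftrightarrow> x \<noteq> 0"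
  using av_nonneg[of x] av_eq_0[of x] by linarith
lemma av_1[simp]: "absv 1 = 1"
proof -
  have "absv 1 = absv 1 * absv 1" using av_mult[of 1 1] by simp
  moreover have "absv 1 \<noteq> 0" by simp
  ultimately show ?thesis by (metis mult_cancel_left1)
qed
lemma av_minus1: "absv (-1) = 1"
proof -
  have h: "absv (-1) * absv (-1) = 1" using av_mult[of "-1" "-1"] by simp
  have "(absv (-1) - 1) * (absv (-1) + 1) = 0" using h by (simp add: algebra_simps)
  moreover have "absv (-1) + 1 \<noteq> 0" using av_nonneg[of "-1"] by linarith
  ultimately show ?thesis by simp
qed
lemma av_minus[simp]: "absv (- x) = absv x"
  using av_mult[of "-1" x] av_minus1 by simp
lemma av_commute_diff: "absv (x - y) = absv (y - x)"
  by (metis av_minus minus_diff_eq)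
lemma av_diff: "absv (x - y) \<le> max (absv x) (absv y)"
  using av_ultra[of x "-y"] by simp
lemma av_inverse[simp]: "absv (inverse x) = inverse (absv x)"
proof (cases "x = 0")
  case False
  then have h: "absv x * absv (inverse x) = 1" using av_mult[of x "inverse x"] by simp
  show ?thesis using inverse_unique[OF h] by simp
qed simp
lemma av_divide[simp]: "absv (x / y) = absv x / absv y"
  by (simp add: divide_inverse)
lemma av_power[simp]: "absv (x ^ n) = absv x ^ n"
  by (induction n) auto
lemma av_strict: assumes "absv x < absv y" shows "absv (x + y) = absv y"
proof -
  have "absv (x + y) \<le> absv y" using av_ultra[of x y] assms by simp
  moreover have "absv y \<le> max (absv (x + y)) (absv x)" using av_diff[of "x+y" x] by simp
  ultimately show ?thesis using assms by linarith
qed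
lemma av_strict': "absv x < absv y \<Longrightarrow> absv (y + x) = absv y"
  using av_strict by (simp add: add.commute)
lemma av_strict_diff: "absv x < absv y \<Longrightarrow> absv (y - x) = absv y"
  using av_strict'[of "-x" y] by simp
lemma av_strict_diff': "absv x < absv y \<Longrightarrow> absv (x - y) = absv y"
  by (metis av_commute_diff av_strict_diff)
lemma av_le_of: "absv x \<le> r \<Longrightarrow> absv y \<le> r \<Longrightarrow> absv (x + y) \<le> r"
  using av_ultra[of x y] by simp
lemma av_lt_of: "absv x < r \<Longrightarrow> absv y < r \<Longrightarrow> absv (x + y) < r"
  using av_ultra[of x y] by simp
lemma av_of_nat_le: "absv (of_nat n) \<le> 1"
proof (induction n)
  case (Suc n) then show ?case using av_le_of[of 1 1 "of_nat n"] by simp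
qed simp
lemma av_of_nat[simp]: assumes "n > 0" shows "absv (of_nat n) = 1"
proof -
  have "\<not> absv (of_nat n) < 1" using rc assms unfolding residue_char_zero_def by blast
  then show ?thesis using av_of_nat_le[of n] by linarith
qed
lemma av_numeral[simp]: "absv (numeral k) = 1"
  using av_of_nat[of "numeral k"] by simp

lemma av_nontriv: "\<exists>p. 0 < absv p \<and> absv p < 1"
proof -
  obtain x where x: "absv x \<noteq> 0" "absv x \<noteq> 1" using Cv unfolding Cv_field_def nontrivial_abs_def by blast
  show ?thesis
  proof (cases "absv x < 1")
    case True then show ?thesis using x by (intro exI[of _ x]) auto
  next
    case False
    then have "absv x > 1" using x by linarith
    then show ?thesis using x by (intro exI[of _ "inverse x"]) (auto simp: field_simps)
  qed
qed

lemma av_small: assumes "e > 0" shows "\<exists>t. 0 < absv t \<and> absv t < e"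
proof -
  obtain p where p: "0 < absv p" "absv p < 1" using av_nontriv by blast
  obtain n where "absv p ^ n < e" using real_arch_pow_inv[OF assms p(2)] by blast
  then show ?thesis using p by (intro exI[of _ "p^n"]) auto
qed

lemma av_large: "\<exists>t. B < absv t"
proof -
  have "0 < 1 / max B 1" by simp
  then obtain t where t: "0 < absv t" "absv t < 1 / (max B 1)" using av_small[of "1 / max B 1"] by blast
  then have "absv (inverse t) = inverse (absv t)" by simp
  moreover have "inverse (1 / max B 1) < inverse (absv t)" by (rule less_imp_inverse_less[OF t(2) t(1)])
  then have "inverse (absv t) > max B 1" by simp
  ultimately show ?thesis by (intro exI[of _ "inverse t"]) auto
qed

lemma alg_closed': "0 < degree (p::'a poly) \<Longrightarrow> \<exists>x. poly p x = 0"
  using Cv unfolding Cv_field_def alg_closed_def by blast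

lemma nth_root: assumes "n > 0" shows "\<exists>y. y ^ n = (x::'a)"
proof -
  have "degree (monom 1 n + [:-x:]) = n" using assms
    by (subst degree_add_eq_left) (auto simp: degree_monom_eq)
  then obtain y where "poly (monom 1 n + [:-x:]) y = 0" using alg_closed'[of "monom 1 n + [:-x:]"] assms by auto
  then show ?thesis by (auto simp: poly_monom)
qed

lemma value_dense: assumes "0 \<le> lo" "lo < hi" shows "\<exists>x. lo < absv x \<and> absv x < hi"
proof (cases "lo = 0")
  case True then show ?thesis using av_small[of hi] assms by auto
next
  case False
  then have lo: "lo > 0" using assms by simp
  define \<rho> where "\<rho> = lo / hi"
  have \<rho>: "0 < \<rho>" "\<rho> < 1" using lo assms unfolding \<rho>_def by auto
  obtain p where p: "0 < absv p" "absv p < 1" using av_nontriv by blast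
  obtain n where n: "\<rho> ^ n < absv p" using real_arch_pow_inv[OF p(1) \<rho>(2)] by blast
  have n0: "n > 0" using n p by (cases n) auto
  obtain y where y: "y ^ n = p" using nth_root[OF n0] by blast
  have yn: "absv y ^ n = absv p" using y by (metis av_power)
  have y1: "\<rho> < absv y" using power_less_imp_less_base[of \<rho> n "absv y"] n yn by simp
  have y2: "absv y < 1"
  proof (rule ccontr)
    assume "\<not> absv y < 1"
    then have "1 \<le> absv y ^ n" using one_le_power by (simp add: not_less)
    then show False using yn p by simp
  qed
  obtain x0 where x0: "hi < absv x0" using av_large by blast
  have x0p: "absv x0 > 0" using x0 assms by linarith
  obtain k where k: "absv y ^ k < hi / absv x0"
    using real_arch_pow_inv[of "hi / absv x0" "absv y"] y2 x0p assms by auto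
  define Pr where "Pr = (\<lambda>k. absv y ^ k * absv x0 < hi)"
  have Pk: "Pr k" using k x0p unfolding Pr_def by (simp add: field_simps)
  have P0: "\<not> Pr 0" using x0 unfolding Pr_def by simp
  obtain m where m: "m \<le> k" "\<forall>i<m. \<not> Pr i" "Pr m" using ex_least_nat_le[of Pr k] Pk P0 by blast
  then obtain j where j: "m = Suc j" using P0 by (cases m) auto
  have "\<not> Pr j" using m j by simp
  then have hj: "hi \<le> absv y ^ j * absv x0" unfolding Pr_def by simp
  have "lo = \<rho> * hi" unfolding \<rho>_def using assms by simp
  also have "\<dots> < absv y * hi" using y1 assms lo by (intro mult_strict_right_mono) auto
  also have "\<dots> \<le> absv y * (absv y ^ j * absv x0)" using hj by (intro mult_left_mono) auto
  also have "\<dots> = absv (y ^ m * x0)" using j by simp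
  finally have "lo < absv (y ^ m * x0)" .
  moreover have "absv (y ^ m * x0) < hi" using m(3) unfolding Pr_def by simp
  ultimately show ?thesis by blast
qed

abbreviation "Pc \<equiv> [:c, 1 + c, 1:]"
abbreviation "Qc \<equiv> [:0, 1:] :: 'a poly"

lemma c_ne0[simp]: "c \<noteq> 0" using c0 by simp

definition fm :: "'a \<Rightarrow> 'a" where "fm z = poly Pc z / poly Qc z"

lemma fm_alt: "z \<noteq> 0 \<Longrightarrow> fm z = z + 1 + c + c / z"
  unfolding fm_def by (simp add: field_simps)

lemma fm_diff: assumes "x \<noteq> 0" "x' \<noteq> 0"
  shows "fm x - fm x' = (x - x') * (1 - c / (x * x'))"
  using assms by (simp add: fm_alt field_simps)

lemma quad_root: "\<exists>z. z \<noteq> 0 \<and> fm z = y"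
proof -
  have "degree [:c, 1 + c - y, 1:] = 2" by simp
  then obtain z where z: "poly [:c, 1 + c - y, 1:] z = 0" using alg_closed'[of "[:c, 1 + c - y, 1:]"] by auto
  have z0: "z \<noteq> 0" using z by auto
  have "fm z = y" using z z0 unfolding fm_def by (simp add: field_simps)
  then show ?thesis using z0 by blast
qed

lemma root_pair: "\<exists>z w. z \<noteq> 0 \<and> w \<noteq> 0 \<and> fm z = y \<and> fm w = y \<and> z * w = c \<and> z + w = y - 1 - c"
proof -
  obtain z where z: "z \<noteq> 0" "fm z = y" using quad_root by blast
  define w where "w = c / z"
  have w0: "w \<noteq> 0" unfolding w_def using z by simp
  have zw: "z * w = c" unfolding w_def using z by simp
  have sum: "z + w = y - 1 - c" using z fm_alt[of z] unfolding w_def by (auto simp: field_simps)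
  have "fm w = y" using fm_alt[OF w0] sum zw z(1) unfolding w_def by (simp add: field_simps)
  then show ?thesis using z w0 zw sum by blast
qed

lemma roots_split: assumes "absv (y - 1 - c) = 1"
  shows "\<exists>z1 z2. fm z1 = y \<and> fm z2 = y \<and> absv z1 = 1 \<and> absv z2 = absv c \<and> z1 + z2 = y - 1 - c \<and> z1 \<noteq> 0 \<and> z2 \<noteq> 0 \<and> z1 * z2 = c"
proof -
  obtain z w where zw: "z \<noteq> 0" "w \<noteq> 0" "fm z = y" "fm w = y" "z * w = c" "z + w = y - 1 - c"
    using root_pair by blast
  have prod: "absv z * absv w = absv c" using zw(5) by (metis av_mult)
  show ?thesis
  proof (cases "absv z < 1")
    case True
    have "absv w = 1"
    proof -
      have "absv ((y - 1 - c) - z) = absv (y - 1 - c)" using True assms by (intro av_strict_diff) simp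
      moreover have "w = (y - 1 - c) - z" using zw(6) by (simp add: algebra_simps)
      ultimately show ?thesis using assms by simp
    qed
    then have "absv z = absv c" using prod by simp
    then show ?thesis using zw \<open>absv w = 1\<close> by (intro exI[of _ w] exI[of _ z]) (auto simp: add.commute mult.commute)
  next
    case False
    then have "absv w \<le> absv c" using prod c0 av_nonneg[of w]
      by (metis mult_le_cancel_right1 not_less)
    then have wl: "absv w < 1" using c1 by linarith
    have "absv ((y - 1 - c) - w) = absv (y - 1 - c)" using wl assms by (intro av_strict_diff) simp
    moreover have "z = (y - 1 - c) - w" using zw(6) by (simp add: algebra_simps)
    ultimately have "absv z = 1" using assms by simp
    then have "absv w = absv c" using prod by simp
    then show ?thesis using zw \<open>absv z = 1\<close> by (intro exI[of _ z] exI[of _ w]) auto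
  qed
qed

lemma root_small: "\<exists>z. z \<noteq> 0 \<and> absv z < 1 \<and> fm z = y"
proof -
  obtain z w where zw: "z \<noteq> 0" "w \<noteq> 0" "fm z = y" "fm w = y" "z * w = c"
    using root_pair by blast
  have prod: "absv z * absv w = absv c" using zw(5) by (metis av_mult)
  show ?thesis
  proof (cases "absv z < 1")
    case True then show ?thesis using zw by blast
  next
    case False
    then have "absv w \<le> absv c" using prod c0 av_nonneg[of w]
      by (metis mult_le_cancel_right1 not_less)
    then show ?thesis using zw c1 by (intro exI[of _ w]) auto
  qed
qed

lemma typeI_in: "typeI absv a \<in> berkA1 absv"
  unfolding berkA1_def berk_seminorm_def typeI_def by (auto simp: av_ultra)

lemma hom_eval: assumes "poly Q a \<noteq> 0"
  shows "poly (hom_compose g P Q) a = poly Q a ^ degree g * poly g (poly P a / poly Q a)"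
proof -
  have "poly (hom_compose g P Q) a = (\<Sum>i\<le>degree g. coeff g i * (poly P a ^ i * poly Q a ^ (degree g - i)))"
    unfolding hom_compose_def by (simp add: poly_sum)
  also have "\<dots> = (\<Sum>i\<le>degree g. poly Q a ^ degree g * (coeff g i * (poly P a / poly Q a) ^ i))"
  proof (rule sum.cong)
    fix i assume "i \<in> {..degree g}"
    then have "i \<le> degree g" by simp
    then have "poly Q a ^ degree g = poly Q a ^ (degree g - i) * poly Q a ^ i"
      by (simp add: power_add[symmetric])
    then show "coeff g i * (poly P a ^ i * poly Q a ^ (degree g - i)) = poly Q a ^ degree g * (coeff g i * (poly P a / poly Q a) ^ i)"
      using assms by (simp add: power_divide field_simps)
  qed simp
  also have "\<dots> = poly Q a ^ degree g * poly g (poly P a / poly Q a)"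
    by (simp add: poly_altdef sum_distrib_left)
  finally show ?thesis .
qed

lemma berk_map_typeI: assumes "a \<noteq> 0"
  shows "berk_map absv Pc Qc (Some (typeI absv a)) = Some (typeI absv (fm a))"
proof -
  have q: "typeI absv a Qc \<noteq> 0" using assms unfolding typeI_def by simp
  have "(\<lambda>g. typeI absv a (hom_compose g Pc Qc) / typeI absv a Qc ^ degree g) = typeI absv (fm a)"
  proof
    fix g :: "'a poly"
    have "typeI absv a (hom_compose g Pc Qc) = absv a ^ degree g * absv (poly g (fm a))"
      unfolding typeI_def using hom_eval[of Qc a g Pc] assms by (simp add: fm_def)
    then show "typeI absv a (hom_compose g Pc Qc) / typeI absv a Qc ^ degree g = typeI absv (fm a) g"
      using assms unfolding typeI_def by simp
  qed
  then show ?thesis using q unfolding berk_map_def by simp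
qed

lemma berk_map_typeI0: "berk_map absv Pc Qc (Some (typeI absv 0)) = None"
  unfolding berk_map_def typeI_def by simp

lemma berk_map_None: "berk_map absv Pc Qc None = None"
  unfolding berk_map_def by simp

lemma rat_map_Some: "z \<noteq> 0 \<Longrightarrow> rat_map Pc Qc (Some z) = Some (fm z)"
  unfolding rat_map_def fm_def by simp

lemma berk_map_iter: "(\<forall>j<n. (fm ^^ j) z \<noteq> 0) \<Longrightarrow>
   (berk_map absv Pc Qc ^^ n) (Some (typeI absv z)) = Some (typeI absv ((fm ^^ n) z))"
  by (induction n) (auto simp: berk_map_typeI)

lemma rat_map_iter: "(\<forall>j<n. (fm ^^ j) z \<noteq> 0) \<Longrightarrow>
   (rat_map Pc Qc ^^ n) (Some z) = Some ((fm ^^ n) z)"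
  by (induction n) (auto simp: rat_map_Some)

end


context cv begin

definition NN :: nat where "NN = nat \<lceil>1 / absv c\<rceil> + 1"

lemma NN_ge: "1 / absv c \<le> real NN" "NN \<ge> 2"
proof -
  have "1 / absv c > 1" using c0 c1 by simp
  then show "1 / absv c \<le> real NN" "NN \<ge> 2" unfolding NN_def by linarith+
qed

definition ret :: "nat \<Rightarrow> bool" where "ret j \<longleftrightarrow> (\<exists>k. Suc j = NN ^ k)"
definition pat :: "nat \<Rightarrow> real" where "pat j = (if ret j then absv c else 1)"
definition fac :: "nat \<Rightarrow> real" where "fac j = (if ret j then 1 / absv c else 1)"
definition DD :: "nat \<Rightarrow> real" where "DD n = (\<Prod>j<n. fac j)"

lemma ret0: "ret 0" unfolding ret_def by (intro exI[of _ 0]) simp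

lemma pat_pos: "0 < pat j" "absv c \<le> pat j" "pat j \<le> 1"
  unfolding pat_def using c0 c1 by auto

lemma fac_ge1: "1 \<le> fac j" unfolding fac_def using c0 c1 by auto

lemma DD_0[simp]: "DD 0 = 1" unfolding DD_def by simp
lemma DD_Suc: "DD (Suc n) = DD n * fac n" unfolding DD_def by simp
lemma DD_ge1: "1 \<le> DD n"
proof (induction n)
  case (Suc n) then show ?case using mult_mono[of 1 "DD n" 1 "fac n"] fac_ge1[of n] by (simp add: DD_Suc)
qed simp
lemma DD_pos: "0 < DD n" using DD_ge1[of n] by linarith
lemma DD_mono: "m \<le> n \<Longrightarrow> DD m \<le> DD n"
proof (induction n)
  case (Suc n)
  have "DD n \<le> DD (Suc n)" using fac_ge1[of n] DD_pos[of n] by (simp add: DD_Suc)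
  then show ?case using Suc by (cases "m = Suc n") auto
qed simp

lemma DD_exact: "\<exists>e. NN ^ e \<le> Suc n \<and> Suc n < NN ^ (Suc e) \<and> DD (Suc n) = (1 / absv c) ^ Suc e"
proof (induction n)
  case 0
  have "DD 1 = 1 / absv c" using ret0 by (simp add: DD_Suc fac_def)
  then show ?case using NN_ge by (intro exI[of _ 0]) auto
next
  case (Suc n)
  then obtain e where e: "NN ^ e \<le> Suc n" "Suc n < NN ^ Suc e" "DD (Suc n) = (1 / absv c) ^ Suc e" by blast
  show ?case
  proof (cases "Suc (Suc n) = NN ^ Suc e")
    case True
    then have "ret (Suc n)" unfolding ret_def by blast
    then have "DD (Suc (Suc n)) = (1 / absv c) ^ Suc (Suc e)" using e(3) by (simp add: DD_Suc fac_def)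
    moreover have "NN ^ Suc e < NN ^ Suc (Suc e)" using NN_ge by (intro power_strict_increasing) auto
    ultimately show ?thesis using True by (intro exI[of _ "Suc e"]) auto
  next
    case False
    then have lt: "Suc (Suc n) < NN ^ Suc e" using e(2) by simp
    have "\<not> ret (Suc n)"
    proof
      assume "ret (Suc n)"
      then obtain k where k: "Suc (Suc n) = NN ^ k" unfolding ret_def by blast
      have N1: "1 < NN" using NN_ge by simp
      have "NN ^ e < NN ^ k" using k e(1) by simp
      then have "e < k" using power_strict_increasing_iff[OF N1, of e k] by blast
      moreover have "NN ^ k < NN ^ Suc e" using k lt by simp
      then have "k < Suc e" using power_strict_increasing_iff[OF N1, of k "Suc e"] by blast
      ultimately show False by simp
    qed
    then have "DD (Suc (Suc n)) = DD (Suc n)" by (simp add: DD_Suc fac_def)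
    then show ?thesis using e lt by (intro exI[of _ e]) auto
  qed
qed

lemma DD_bound: assumes "1 \<le> n" shows "DD n \<le> real n / absv c"
proof -
  obtain m where m: "n = Suc m" using assms by (cases n) auto
  obtain e where e: "NN ^ e \<le> n" "DD n = (1 / absv c) ^ Suc e" using DD_exact[of m] m by blast
  have "(1 / absv c) ^ e \<le> real NN ^ e" using NN_ge(1) c0 by (intro power_mono) auto
  also have "\<dots> \<le> real n" using e(1) by (metis of_nat_le_iff of_nat_power)
  finally have "(1 / absv c) ^ e \<le> real n" .
  then have "(1 / absv c) ^ e / absv c \<le> real n / absv c" using c0 by (simp add: divide_right_mono)
  moreover have "(1 / absv c) ^ Suc e = (1 / absv c) ^ e / absv c" by (simp add: power_Suc2 divide_inverse)
  ultimately show ?thesis using e(2) by simp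
qed

lemma DD_unbounded: "\<exists>n. B < DD n"
proof -
  have "1 < 1 / absv c" using c0 c1 by simp
  then obtain e where e: "B < (1 / absv c) ^ e" using real_arch_pow by blast
  have "NN ^ e \<ge> 1" using NN_ge by simp
  then obtain m where m: "NN ^ e = Suc m" by (cases "NN ^ e") auto
  obtain e' where e': "NN ^ e' \<le> Suc m" "Suc m < NN ^ Suc e'" "DD (Suc m) = (1 / absv c) ^ Suc e'"
    using DD_exact[of m] by blast
  have N1: "1 < NN" using NN_ge by simp
  have "NN ^ e < NN ^ Suc e'" using m e'(2) by simp
  then have "e < Suc e'" using power_strict_increasing_iff[OF N1, of e "Suc e'"] by blast
  then have "e \<le> e'" by simp
  then have "(1 / absv c) ^ e \<le> (1 / absv c) ^ Suc e'" using \<open>1 < 1 / absv c\<close> by (intro power_increasing) auto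
  then show ?thesis using e e'(3) by (intro exI[of _ "Suc m"]) auto
qed

lemma nonret_prev: "\<not> ret i \<Longrightarrow> \<exists>p<i. ret p \<and> DD i = DD p / absv c"
proof (induction i)
  case 0 then show ?case using ret0 by simp
next
  case (Suc k)
  show ?case
  proof (cases "ret k")
    case True then show ?thesis by (intro exI[of _ k]) (simp add: DD_Suc fac_def)
  next
    case False
    then obtain p where "p < k" "ret p" "DD k = DD p / absv c" using Suc by blast
    then show ?thesis using False by (intro exI[of _ p]) (simp add: DD_Suc fac_def)
  qed
qed

lemma ret_after: "\<exists>m>n. ret m"
proof -
  have "Suc n < 2 ^ Suc n" by (rule less_exp)
  also have "(2::nat) ^ Suc n \<le> NN ^ Suc n" using NN_ge by (intro power_mono) auto
  finally have lt: "Suc n < NN ^ Suc n" .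
  define m where "m = NN ^ Suc n - 1"
  have "Suc m = NN ^ Suc n" using lt unfolding m_def by simp
  then have "ret m" unfolding ret_def by blast
  moreover have "m > n" using lt unfolding m_def by simp
  ultimately show ?thesis by blast
qed

lemma scale_step: assumes "absv x = pat j" "absv x' = pat j"
  shows "absv (fm x - fm x') = absv (x - x') * fac j"
proof -
  have x0: "x \<noteq> 0" "x' \<noteq> 0" using assms pat_pos[of j] by auto
  have e: "absv (fm x - fm x') = absv (x - x') * absv (1 - c / (x * x'))"
    using fm_diff[OF x0] by simp
  show ?thesis
  proof (cases "ret j")
    case True
    then have a: "absv x = absv c" "absv x' = absv c" using assms unfolding pat_def by auto
    have t: "absv (c / (x * x')) = 1 / absv c" using a c0 by (simp add: power2_eq_square)
    have "1 < 1 / absv c" using c0 c1 by simp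
    then have "absv (1 - c / (x * x')) = 1 / absv c"
      using av_strict_diff'[of 1 "c / (x * x')"] t by simp
    then show ?thesis using e True unfolding fac_def by simp
  next
    case False
    then have a: "absv x = 1" "absv x' = 1" using assms unfolding pat_def by auto
    have t: "absv (c / (x * x')) = absv c" using a by simp
    then have "absv (1 - c / (x * x')) = 1"
      using av_strict_diff[of "c / (x * x')" 1] c1 by simp
    then show ?thesis using e False unfolding fac_def by simp
  qed
qed

definition follows :: "'a \<Rightarrow> nat \<Rightarrow> bool" where
  "follows z T \<longleftrightarrow> (\<forall>j<T. absv ((fm ^^ j) z) = pat j)"

lemma follows_mono: "follows z T \<Longrightarrow> S \<le> T \<Longrightarrow> follows z S"
  unfolding follows_def by auto

lemma follows_nz: assumes "follows z T" "j < T" shows "(fm ^^ j) z \<noteq> 0"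
proof -
  have "absv ((fm ^^ j) z) = pat j" using assms unfolding follows_def by simp
  then show ?thesis using pat_pos(1)[of j] by auto
qed

lemma follows_scale: "follows z T \<Longrightarrow> follows z' T \<Longrightarrow>
   absv ((fm ^^ T) z - (fm ^^ T) z') = absv (z - z') * DD T"
proof (induction T)
  case (Suc T)
  then have IH: "absv ((fm ^^ T) z - (fm ^^ T) z') = absv (z - z') * DD T"
    using follows_mono[of _ "Suc T" T] by simp
  have "absv ((fm ^^ T) z) = pat T" "absv ((fm ^^ T) z') = pat T"
    using Suc.prems unfolding follows_def by auto
  then have "absv (fm ((fm ^^ T) z) - fm ((fm ^^ T) z')) = absv ((fm ^^ T) z - (fm ^^ T) z') * fac T"
    by (rule scale_step)
  then show ?case using IH by (simp add: DD_Suc)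
qed simp

lemma follows_near: "follows z T \<Longrightarrow> absv (z' - z) * DD T < absv c \<Longrightarrow>
   follows z' T \<and> absv ((fm ^^ T) z' - (fm ^^ T) z) = absv (z' - z) * DD T"
proof (induction T)
  case 0 then show ?case unfolding follows_def by simp
next
  case (Suc T)
  have zT: "follows z T" using Suc.prems(1) follows_mono by fastforce
  have "absv (z' - z) * DD T \<le> absv (z' - z) * DD (Suc T)"
    using DD_mono[of T "Suc T"] by (intro mult_left_mono) auto
  then have lt: "absv (z' - z) * DD T < absv c" using Suc.prems(2) by linarith
  from Suc.IH[OF zT lt] have ih: "follows z' T" "absv ((fm ^^ T) z' - (fm ^^ T) z) = absv (z' - z) * DD T"
    by auto
  have pz: "absv ((fm ^^ T) z) = pat T" using Suc.prems(1) unfolding follows_def by simp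
  have "absv ((fm ^^ T) z' - (fm ^^ T) z) < absv ((fm ^^ T) z)" using ih(2) lt pz pat_pos(2)[of T] by linarith
  then have "absv ((fm ^^ T) z + ((fm ^^ T) z' - (fm ^^ T) z)) = absv ((fm ^^ T) z)"
    by (rule av_strict')
  then have pz': "absv ((fm ^^ T) z') = pat T" using pz by simp
  then have f': "follows z' (Suc T)" using ih(1) unfolding follows_def by (auto simp: less_Suc_eq)
  have "absv (fm ((fm ^^ T) z') - fm ((fm ^^ T) z)) = absv ((fm ^^ T) z' - (fm ^^ T) z) * fac T"
    using scale_step[OF pz' pz] .
  then show ?case using f' ih(2) by (simp add: DD_Suc)
qed

lemma back_step: assumes "absv (y + of_nat d) < 1"
  shows "\<exists>z. fm z = y \<and> absv z = pat s \<and> (\<exists>d'. absv (z + of_nat d') < 1)"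
proof -
  have "absv (y - 1 - c) = 1"
  proof -
    have eq: "y - 1 - c = (y + of_nat d - c) - of_nat (Suc d)" by (simp add: algebra_simps)
    have l: "absv (y + of_nat d - c) < 1" using assms c1 av_diff[of "y + of_nat d" c] by simp
    have o: "absv (of_nat (Suc d) :: 'a) = 1" by (rule av_of_nat) simp
    have "absv ((y + of_nat d - c) - of_nat (Suc d)) = absv (of_nat (Suc d) :: 'a)"
      by (rule av_strict_diff') (use l o in simp)
    then show ?thesis unfolding eq o .
  qed
  then obtain z1 z2 where z: "fm z1 = y" "fm z2 = y" "absv z1 = 1" "absv z2 = absv c" "z1 + z2 = y - 1 - c"
    using roots_split by blast
  show ?thesis
  proof (cases "ret s")
    case True
    have h: "absv (z2 + of_nat 0) < 1" using z c1 by simp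
    have "fm z2 = y \<and> absv z2 = pat s \<and> (\<exists>d'. absv (z2 + of_nat d') < 1)"
      using z(2,4) True h unfolding pat_def by (intro conjI exI[of _ 0]) auto
    then show ?thesis by (rule exI)
  next
    case False
    have e: "z1 + of_nat (Suc d) = (y + of_nat d) - c - z2" using z(5) by (simp add: algebra_simps)
    have l: "absv ((y + of_nat d) - c - z2) < 1"
      using assms c1 z(4) av_diff[of "y + of_nat d - c" z2] av_diff[of "y + of_nat d" c] by simp
    have "absv (z1 + of_nat (Suc d)) < 1" unfolding e using l .
    then have "fm z1 = y \<and> absv z1 = pat s \<and> (\<exists>d'. absv (z1 + of_nat d') < 1)"
      using z(1,3) False unfolding pat_def by (intro conjI exI[of _ "Suc d"]) auto
    then show ?thesis by (rule exI)
  qed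
qed

lemma back_chain: "absv (y + of_nat d) < 1 \<Longrightarrow>
  \<exists>z. (\<forall>j<n. absv ((fm ^^ j) z) = pat (s + j)) \<and> (fm ^^ n) z = y \<and> (\<exists>d'. absv (z + of_nat d') < 1)"
proof (induction n arbitrary: s)
  case 0 then show ?case by auto
next
  case (Suc n)
  obtain w where w: "\<forall>j<n. absv ((fm ^^ j) w) = pat (Suc s + j)" "(fm ^^ n) w = y" "\<exists>d'. absv (w + of_nat d') < 1"
    using Suc.IH[OF Suc.prems] by blast
  obtain d' where d': "absv (w + of_nat d') < 1" using w(3) by blast
  obtain z where z: "fm z = w" "absv z = pat s" "\<exists>d'. absv (z + of_nat d') < 1" using back_step[OF d'] by blast
  have "\<forall>j<Suc n. absv ((fm ^^ j) z) = pat (s + j)"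
  proof (intro allI impI)
    fix j assume "j < Suc n"
    then show "absv ((fm ^^ j) z) = pat (s + j)"
    proof (cases j)
      case 0 then show ?thesis using z by simp
    next
      case (Suc i)
      then have "(fm ^^ j) z = (fm ^^ i) w" using z(1) by (simp add: funpow_Suc_right del: funpow.simps)
      then show ?thesis using w(1) Suc \<open>j < Suc n\<close> by simp
    qed
  qed
  moreover have "(fm ^^ Suc n) z = y" using z(1) w(2) by (simp add: funpow_Suc_right del: funpow.simps)
  ultimately show ?case using z(3) by blast
qed

lemma exists_follows: "\<exists>z. follows z T"
proof -
  have "absv (c + of_nat 0) < 1" using c1 by simp
  from back_chain[OF this, of T 0] show ?thesis unfolding follows_def by auto
qed

lemma complete': fixes X :: "nat \<Rightarrow> 'a"
  assumes "\<forall>e>0. \<exists>N. \<forall>m\<ge>N. \<forall>n\<ge>N. absv (X m - X n) < e"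
  shows "\<exists>L. \<forall>e>0. \<exists>N. \<forall>n\<ge>N. absv (X n - L) < e"
proof -
  have "complete_abs absv" using Cv by (simp add: Cv_field_def)
  then have "(\<forall>e>0. \<exists>N. \<forall>m\<ge>N. \<forall>n\<ge>N. absv (X m - X n) < e) \<longrightarrow>
        (\<exists>L. \<forall>e>0. \<exists>N. \<forall>n\<ge>N. absv (X n - L) < e)" unfolding complete_abs_def by (rule spec)
  then show ?thesis using assms by (rule mp)
qed

definition beta :: "nat \<Rightarrow> 'a" where "beta K = (SOME z. follows z (Suc K))"

lemma beta_follows: "follows (beta K) (Suc K)"
  unfolding beta_def by (rule someI_ex[OF exists_follows])

lemma beta_close: assumes "K \<le> K'" shows "absv (beta K - beta K') * DD K \<le> 1"
proof -
  have f1: "follows (beta K) K" using follows_mono[OF beta_follows[of K]] by simp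
  have f2: "follows (beta K') K" using follows_mono[OF beta_follows[of K']] assms by simp
  have "absv ((fm ^^ K) (beta K) - (fm ^^ K) (beta K')) = absv (beta K - beta K') * DD K"
    by (rule follows_scale[OF f1 f2])
  moreover have "absv ((fm ^^ K) (beta K)) = pat K" using beta_follows[of K] unfolding follows_def by simp
  moreover have "absv ((fm ^^ K) (beta K')) = pat K" using beta_follows[of K'] assms unfolding follows_def by simp
  ultimately show ?thesis using av_diff[of "(fm ^^ K) (beta K)" "(fm ^^ K) (beta K')"] pat_pos(3)[of K] by simp
qed

lemma beta_close': assumes "K \<le> K'" shows "absv (beta K - beta K') \<le> 1 / DD K"
  using beta_close[OF assms] DD_pos[of K] by (simp add: field_simps)

lemma exists_b: "\<exists>b. \<forall>T. follows b T"
proof -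
  have "\<forall>e>0. \<exists>N. \<forall>m\<ge>N. \<forall>n\<ge>N. absv (beta m - beta n) < e"
  proof (intro allI impI)
    fix e :: real assume e: "e > 0"
    obtain N where N: "1 / e < DD N" using DD_unbounded by blast
    have "1 / DD N < e" using N e DD_pos[of N] by (simp add: field_simps)
    have "absv (beta m - beta n) < e" if "m \<ge> N" "n \<ge> N" for m n
    proof (cases "m \<le> n")
      case True
      have "absv (beta m - beta n) \<le> 1 / DD m" using beta_close'[OF True] .
      also have "\<dots> \<le> 1 / DD N" using DD_mono[OF that(1)] DD_pos[of N] by (intro divide_left_mono) auto
      finally show ?thesis using \<open>1 / DD N < e\<close> by linarith
    next
      case False
      have "absv (beta m - beta n) = absv (beta n - beta m)" by (rule av_commute_diff)
      also have "\<dots> \<le> 1 / DD n" using beta_close' False by simp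
      also have "\<dots> \<le> 1 / DD N" using DD_mono[OF that(2)] DD_pos[of N] by (intro divide_left_mono) auto
      finally show ?thesis using \<open>1 / DD N < e\<close> by linarith
    qed
    then show "\<exists>N. \<forall>m\<ge>N. \<forall>n\<ge>N. absv (beta m - beta n) < e" by blast
  qed
  then obtain L where L: "\<forall>e>0. \<exists>N. \<forall>n\<ge>N. absv (beta n - L) < e" using complete' by blast
  have "follows L T" for T
  proof -
    have "absv c / DD T > 0" using c0 DD_pos[of T] by simp
    then obtain N where N: "\<forall>n\<ge>N. absv (beta n - L) < absv c / DD T" using L by blast
    define n where "n = max N T"
    have fb: "follows (beta n) T" using follows_mono[OF beta_follows[of n]] unfolding n_def by simp
    have "absv (L - beta n) < absv c / DD T" using N unfolding n_def by (simp add: av_commute_diff)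
    then have "absv (L - beta n) * DD T < absv c" using DD_pos[of T] by (simp add: field_simps)
    then show ?thesis using follows_near[OF fb] by blast
  qed
  then show ?thesis by blast
qed

lemma chordal_at_ev: "eventually P (chordal_at absv x) \<longleftrightarrow>
   (\<exists>e>0. \<forall>y. y \<noteq> x \<and> chordal absv x y < e \<longrightarrow> P y)"
proof -
  have "eventually P (chordal_at absv x) \<longleftrightarrow>
      (\<exists>e\<in>{0<..}. eventually P (principal {y. y \<noteq> x \<and> chordal absv x y < e}))"
    unfolding chordal_at_def
  proof (rule eventually_INF_base)
    show "{0::real<..} \<noteq> {}" by auto
    fix a b :: real assume "a \<in> {0<..}" "b \<in> {0<..}"
    then show "\<exists>e\<in>{0<..}. principal {y. y \<noteq> x \<and> chordal absv x y < e}
        \<le> inf (principal {y. y \<noteq> x \<and> chordal absv x y < a}) (principal {y. y \<noteq> x \<and> chordal absv x y < b})"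
      by (intro bexI[of _ "min a b"]) auto
  qed
  then show ?thesis by (simp add: eventually_principal Bex_def)
qed

lemma chordal_SS: "chordal absv (Some x) (Some y) = absv (x - y) / (max 1 (absv x) * max 1 (absv y))"
  unfolding chordal_def by simp
lemma chordal_SN: "chordal absv (Some x) None = 1 / max 1 (absv x)"
  unfolding chordal_def by simp

lemma chordal_at_nontriv: "\<not> trivial_limit (chordal_at absv (Some b))"
proof
  assume "trivial_limit (chordal_at absv (Some b))"
  then have "eventually (\<lambda>_. False) (chordal_at absv (Some b))" by (simp add: trivial_limit_def)
  then obtain e where e: "e > 0" "\<forall>y. y \<noteq> Some b \<and> chordal absv (Some b) y < e \<longrightarrow> False"
    unfolding chordal_at_ev by blast
  obtain t where t: "0 < absv t" "absv t < e" using av_small[OF e(1)] by blast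
  have "chordal absv (Some b) (Some (b + t)) \<le> absv t"
  proof -
    have "absv (b - (b + t)) = absv t" by simp
    moreover have "1 \<le> max 1 (absv b) * max 1 (absv (b + t))"
      using mult_mono[of 1 "max 1 (absv b)" 1 "max 1 (absv (b+t))"] by simp
    ultimately show ?thesis unfolding chordal_SS using t(1)
      by (simp add: divide_le_eq)
  qed
  moreover have "Some (b + t) \<noteq> Some b" using t by auto
  moreover have "chordal absv (Some b) (Some (b + t)) < e" using calculation(1) t(2) by linarith
  ultimately show False using e(2) by blast
qed

lemma sph_deriv_b: assumes b: "\<forall>T. follows b T"
  shows "sph_deriv absv (rat_map Pc Qc ^^ n) (Some b) = DD n"
proof -
  let ?g = "rat_map Pc Qc ^^ n"
  define e where "e = absv c / DD n"
  have e0: "e > 0" unfolding e_def using c0 DD_pos[of n] by simp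
  have e1: "e \<le> absv c" unfolding e_def using c0 DD_ge1[of n] by (simp add: divide_le_eq)
  have "follows b 1" using b by simp
  then have "absv ((fm ^^ 0) b) = pat 0" unfolding follows_def by simp
  then have bb: "absv b = absv c" using ret0 unfolding pat_def by simp
  have "follows b (Suc n)" using b by simp
  then have fnb: "absv ((fm ^^ n) b) = pat n" unfolding follows_def by simp
  have gb: "?g (Some b) = Some ((fm ^^ n) b)"
    using rat_map_iter follows_nz[OF b[rule_format, of n]] by blast
  have ev: "eventually (\<lambda>y. chordal absv (?g (Some b)) (?g y) / chordal absv (Some b) y = DD n)
             (chordal_at absv (Some b))"
    unfolding chordal_at_ev
  proof (intro exI[of _ e] conjI allI impI)
    show "e > 0" by (rule e0)
    fix y assume y: "y \<noteq> Some b \<and> chordal absv (Some b) y < e"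
    show "chordal absv (?g (Some b)) (?g y) / chordal absv (Some b) y = DD n"
    proof (cases y)
      case None
      then have "chordal absv (Some b) y = 1" using bb c1 by (simp add: chordal_SN)
      then show ?thesis using y e1 c1 by simp
    next
      case (Some z)
      have zb: "z \<noteq> b" using y Some by simp
      have z1: "absv z \<le> 1"
      proof (rule ccontr)
        assume "\<not> absv z \<le> 1"
        then have "absv b < absv z" using bb c1 by simp
        then have "absv (b - z) = absv z" by (rule av_strict_diff')
        moreover have "z \<noteq> 0" using \<open>\<not> absv z \<le> 1\<close> by auto
        ultimately have "chordal absv (Some b) y = 1" using Some bb c1 \<open>\<not> absv z \<le> 1\<close> by (simp add: chordal_SS)
        then show False using y e1 c1 by simp
      qed
      have ch: "chordal absv (Some b) y = absv (z - b)"
        using Some bb c1 z1 by (simp add: chordal_SS av_commute_diff)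
      have "absv (z - b) < e" using y ch by simp
      then have "absv (z - b) * DD n < absv c" unfolding e_def using DD_pos[of n] by (simp add: field_simps)
      from follows_near[OF b[rule_format, of n] this]
      have fz: "follows z n" and dz: "absv ((fm ^^ n) z - (fm ^^ n) b) = absv (z - b) * DD n" by auto
      have gz: "?g y = Some ((fm ^^ n) z)" using Some rat_map_iter follows_nz[OF fz] by blast
      have "absv ((fm ^^ n) z - (fm ^^ n) b) < absv ((fm ^^ n) b)"
        using dz \<open>absv (z - b) * DD n < absv c\<close> fnb pat_pos(2)[of n] by linarith
      then have "absv ((fm ^^ n) b + ((fm ^^ n) z - (fm ^^ n) b)) = absv ((fm ^^ n) b)" by (rule av_strict')
      then have fnz: "absv ((fm ^^ n) z) = pat n" using fnb by simp
      have "chordal absv (?g (Some b)) (?g y) = absv ((fm ^^ n) b - (fm ^^ n) z)"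
        unfolding gb gz chordal_SS using fnb fnz pat_pos(3)[of n] by simp
      also have "\<dots> = absv ((fm ^^ n) z - (fm ^^ n) b)" by (rule av_commute_diff)
      also have "\<dots> = absv (z - b) * DD n" by (rule dz)
      finally show ?thesis using ch zb by simp
    qed
  qed
  have "((\<lambda>y. chordal absv (?g (Some b)) (?g y) / chordal absv (Some b) y) \<longlongrightarrow> DD n) (chordal_at absv (Some b))"
    by (rule tendsto_eventually) (rule ev)
  then show ?thesis unfolding sph_deriv_def by (rule tendsto_Lim[OF chordal_at_nontriv])
qed

end


context cv begin

abbreviation "A1 \<equiv> berkA1 absv"
abbreviation "X1 \<equiv> [:0, 1:] :: 'a poly"

lemma sn_const: "\<zeta> \<in> A1 \<Longrightarrow> \<zeta> [:a:] = absv a"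
  unfolding berkA1_def berk_seminorm_def by blast
lemma sn_nonneg: "\<zeta> \<in> A1 \<Longrightarrow> 0 \<le> \<zeta> p"
  unfolding berkA1_def berk_seminorm_def by blast
lemma sn_mult: "\<zeta> \<in> A1 \<Longrightarrow> \<zeta> (p * q) = \<zeta> p * \<zeta> q"
  unfolding berkA1_def berk_seminorm_def by blast
lemma sn_ultra: "\<zeta> \<in> A1 \<Longrightarrow> \<zeta> (p + q) \<le> max (\<zeta> p) (\<zeta> q)"
  unfolding berkA1_def berk_seminorm_def by blast
lemma sn_0: "\<zeta> \<in> A1 \<Longrightarrow> \<zeta> 0 = 0"
  using sn_const[of \<zeta> 0] by simp
lemma sn_1: "\<zeta> \<in> A1 \<Longrightarrow> \<zeta> 1 = 1"
  using sn_const[of \<zeta> 1] by (simp add: pCons_one)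
lemma sn_smult: "\<zeta> \<in> A1 \<Longrightarrow> \<zeta> (smult a p) = absv a * \<zeta> p"
proof -
  assume z: "\<zeta> \<in> A1"
  have "smult a p = [:a:] * p" by simp
  then show ?thesis using sn_mult[OF z, of "[:a:]" p] sn_const[OF z] by simp
qed
lemma sn_minus: "\<zeta> \<in> A1 \<Longrightarrow> \<zeta> (- p) = \<zeta> p"
  using sn_smult[of \<zeta> "-1" p] by simp
lemma sn_diff: "\<zeta> \<in> A1 \<Longrightarrow> \<zeta> (p - q) \<le> max (\<zeta> p) (\<zeta> q)"
  using sn_ultra[of \<zeta> p "-q"] sn_minus[of \<zeta> q] by simp
lemma sn_strict: assumes z: "\<zeta> \<in> A1" and lt: "\<zeta> p < \<zeta> q" shows "\<zeta> (p + q) = \<zeta> q"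
proof -
  have "\<zeta> (p + q) \<le> \<zeta> q" using sn_ultra[OF z, of p q] lt by simp
  moreover have "\<zeta> q \<le> max (\<zeta> (p + q)) (\<zeta> p)" using sn_diff[OF z, of "p + q" p] by simp
  ultimately show ?thesis using lt by linarith
qed
lemma sn_strict': "\<zeta> \<in> A1 \<Longrightarrow> \<zeta> p < \<zeta> q \<Longrightarrow> \<zeta> (q + p) = \<zeta> q"
  using sn_strict by (simp add: add.commute)
lemma sn_power: "\<zeta> \<in> A1 \<Longrightarrow> \<zeta> (p ^ n) = \<zeta> p ^ n"
  by (induction n) (simp_all add: sn_1 sn_mult)
lemma sn_sum: assumes z: "\<zeta> \<in> A1" shows "\<zeta> (sum f S) \<le> (\<Sum>i\<in>S. \<zeta> (f i))"
proof (induction S rule: infinite_finite_induct)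
  case (infinite A) then show ?case using sn_0[OF z] by simp
next
  case empty then show ?case using sn_0[OF z] by simp
next
  case (insert x F)
  have "\<zeta> (sum f (insert x F)) = \<zeta> (f x + sum f F)" using insert by simp
  also have "\<dots> \<le> max (\<zeta> (f x)) (\<zeta> (sum f F))" by (rule sn_ultra[OF z])
  also have "\<dots> \<le> \<zeta> (f x) + (\<Sum>i\<in>F. \<zeta> (f i))"
  proof -
    have h1: "\<zeta> (sum f F) \<le> (\<Sum>i\<in>F. \<zeta> (f i))" by (rule insert.IH)
    have h2: "0 \<le> \<zeta> (f x)" by (rule sn_nonneg[OF z])
    have h3: "0 \<le> (\<Sum>i\<in>F. \<zeta> (f i))" by (rule sum_nonneg) (rule sn_nonneg[OF z])
    show ?thesis using h1 h2 h3 by (simp add: max.bounded_iff)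
  qed
  also have "\<dots> = (\<Sum>i\<in>insert x F. \<zeta> (f i))" using insert by simp
  finally show ?case .
qed

lemma sn_X1: assumes z: "\<zeta> \<in> A1" shows "\<zeta> X1 \<le> max (\<zeta> [:-a, 1:]) (absv a)"
proof -
  have "X1 = [:-a, 1:] + [:a:]" by simp
  then show ?thesis using sn_ultra[OF z, of "[:-a, 1:]" "[:a:]"] sn_const[OF z] by simp
qed

definition bnd :: "'a poly \<Rightarrow> real \<Rightarrow> real" where
  "bnd g R = (\<Sum>i\<le>degree g. absv (coeff g i) * R ^ i)"

lemma sn_bound: assumes z: "\<zeta> \<in> A1" and R: "\<zeta> X1 \<le> R" shows "\<zeta> g \<le> bnd g R"
proof -
  have "\<zeta> g = \<zeta> (\<Sum>i\<le>degree g. monom (coeff g i) i)" by (simp add: poly_as_sum_of_monoms)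
  also have "\<dots> \<le> (\<Sum>i\<le>degree g. \<zeta> (monom (coeff g i) i))" by (rule sn_sum[OF z])
  also have "\<dots> \<le> bnd g R" unfolding bnd_def
  proof (rule sum_mono)
    fix i
    have "\<zeta> (monom (coeff g i) i) = absv (coeff g i) * \<zeta> X1 ^ i"
      by (simp add: monom_altdef sn_smult[OF z] sn_power[OF z])
    also have "\<dots> \<le> absv (coeff g i) * R ^ i"
      using R sn_nonneg[OF z, of X1] by (intro mult_left_mono power_mono) auto
    finally show "\<zeta> (monom (coeff g i) i) \<le> absv (coeff g i) * R ^ i" .
  qed
  finally show ?thesis .
qed

abbreviation PT :: "('a poly \<Rightarrow> real) topology" where
  "PT \<equiv> product_topology (\<lambda>_. euclideanreal) UNIV"

lemma topspace_PT[simp]: "topspace PT = UNIV"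
  by simp

lemma cm_proj: "continuous_map PT euclideanreal (\<lambda>f. f g)"
  by (rule continuous_map_product_projection) simp

lemma open_proj: "open U \<Longrightarrow> openin PT {f. f g \<in> U}"
  using openin_continuous_map_preimage[OF cm_proj[of g], of U] by simp

lemma A1_top_eq: "berkA1_top absv = subtopology PT A1"
proof -
  let ?S = "{{\<zeta> \<in> A1. \<zeta> g \<in> U} | g U. open (U :: real set)}"
  have "openin (berkA1_top absv) S \<longleftrightarrow> openin (subtopology PT A1) S" for S
  proof
    assume "openin (berkA1_top absv) S"
    then have "generate_topology_on ?S S" unfolding berkA1_top_def by (rule openin_topology_generated_by)
    then show "openin (subtopology PT A1) S"
    proof induction
      case Empty then show ?case by simp
    next
      case (Int a b) then show ?case using Int.IH by (simp add: openin_Int)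
    next
      case (UN K) then show ?case using UN.IH by (simp add: openin_Union)
    next
      case (Basis s)
      then obtain g U where s: "s = {\<zeta> \<in> A1. \<zeta> g \<in> U}" "open U" by blast
      have "s = {f. f g \<in> U} \<inter> A1" using s by auto
      then show ?case unfolding openin_subtopology using open_proj[OF s(2)] by blast
    qed
  next
    assume "openin (subtopology PT A1) S"
    then obtain W where W: "openin PT W" "S = W \<inter> A1" unfolding openin_subtopology by blast
    show "openin (berkA1_top absv) S"
    proof (subst openin_subopen, intro ballI)
      fix x assume xS: "x \<in> S"
      then have "x \<in> W" using W by simp
      then obtain V where V: "finite {i. V i \<noteq> topspace euclideanreal}" "\<forall>i. openin euclideanreal (V i)"
          "x \<in> Pi\<^sub>E UNIV V" "Pi\<^sub>E UNIV V \<subseteq> W"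
        using W(1) unfolding openin_product_topology_alt by auto
      let ?G = "{i. V i \<noteq> UNIV}"
      let ?F = "insert A1 ((\<lambda>g. {\<zeta> \<in> A1. \<zeta> g \<in> V g}) ` ?G)"
      have fin: "finite ?F" using V(1) by simp
      have gen: "generate_topology_on ?S (\<Inter>?F)"
      proof (rule generate_topology_on_Inter[OF fin])
        fix K assume "K \<in> ?F"
        then show "generate_topology_on ?S K"
        proof
          assume "K = A1"
          then have "K = {\<zeta> \<in> A1. \<zeta> 0 \<in> UNIV}" by simp
          then show ?thesis by (intro generate_topology_on.Basis) blast
        next
          assume "K \<in> (\<lambda>g. {\<zeta> \<in> A1. \<zeta> g \<in> V g}) ` ?G"
          then obtain g where "K = {\<zeta> \<in> A1. \<zeta> g \<in> V g}" by blast
          moreover have "open (V g)" using V(2) by simp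
          ultimately show ?thesis by (intro generate_topology_on.Basis) blast
        qed
      qed simp
      have "x \<in> \<Inter>?F" using xS W V(3) by auto
      moreover have "\<Inter>?F \<subseteq> S"
      proof
        fix y assume y: "y \<in> \<Inter>?F"
        then have yA: "y \<in> A1" by simp
        have "\<forall>g. y g \<in> V g"
        proof
          fix g show "y g \<in> V g" using y by (cases "V g = UNIV") auto
        qed
        then have "y \<in> Pi\<^sub>E UNIV V" by (simp add: PiE_iff)
        then show "y \<in> S" using V(4) W(2) yA by auto
      qed
      moreover have "openin (berkA1_top absv) (\<Inter>?F)"
        unfolding berkA1_top_def openin_topology_generated_by_iff by (rule gen)
      ultimately show "\<exists>T. openin (berkA1_top absv) T \<and> x \<in> T \<and> T \<subseteq> S" by blast
    qed
  qed
  then show ?thesis by (simp add: topology_eq)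
qed

lemma closed_A1: "closedin PT A1"
proof -
  have c1: "closedin PT {f. f [:a:] = absv a}" for a
    using closedin_continuous_map_preimage[OF cm_proj[of "[:a:]"], of "{absv a}"] by simp
  have c2: "closedin PT {f. 0 \<le> f p}" for p
    using closedin_continuous_map_preimage[OF cm_proj[of p], of "{0..}"] by simp
  have c3: "closedin PT {f. f (p * q) = f p * f q}" for p q
  proof -
    have "continuous_map PT euclideanreal (\<lambda>f. f (p * q) - f p * f q)"
      by (intro continuous_map_diff continuous_map_real_mult cm_proj)
    from closedin_continuous_map_preimage[OF this, of "{0}"] show ?thesis by simp
  qed
  have c4: "closedin PT {f. f (p + q) \<le> max (f p) (f q)}" for p q
  proof -
    have "continuous_map PT euclideanreal (\<lambda>f. f (p + q) - max (f p) (f q))"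
      by (intro continuous_map_diff continuous_map_real_max cm_proj)
    from closedin_continuous_map_preimage[OF this, of "{..0}"] show ?thesis by simp
  qed
  have eq: "A1 = \<Inter>(range (\<lambda>a. {f. f [:a:] = absv a})) \<inter> \<Inter>(range (\<lambda>p. {f. 0 \<le> f p}))
      \<inter> \<Inter>(range (\<lambda>(p,q). {f. f (p * q) = f p * f q})) \<inter> \<Inter>(range (\<lambda>(p,q). {f. f (p + q) \<le> max (f p) (f q)}))"
    unfolding berkA1_def berk_seminorm_def by auto
  show ?thesis unfolding eq
    by (intro closedin_Int closedin_Inter) (auto simp: c1 c2 c3 c4)
qed

definition Kd :: "'a \<Rightarrow> real \<Rightarrow> ('a poly \<Rightarrow> real) set" where
  "Kd a r = {\<zeta> \<in> A1. \<zeta> [:-a, 1:] \<le> r}"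

lemma compact_Kd: "compactin (berkA1_top absv) (Kd a r)"
proof -
  define R where "R = max r (absv a)"
  have sub: "Kd a r \<subseteq> Pi\<^sub>E UNIV (\<lambda>g. {0..bnd g R})"
  proof
    fix \<zeta> assume z: "\<zeta> \<in> Kd a r"
    then have zA: "\<zeta> \<in> A1" "\<zeta> [:-a, 1:] \<le> r" unfolding Kd_def by auto
    have "\<zeta> X1 \<le> R" using sn_X1[OF zA(1), of a] zA(2) unfolding R_def by auto
    then show "\<zeta> \<in> Pi\<^sub>E UNIV (\<lambda>g. {0..bnd g R})"
      using sn_bound[OF zA(1)] sn_nonneg[OF zA(1)] by (auto simp: PiE_def)
  qed
  have cbox: "compactin PT (Pi\<^sub>E UNIV (\<lambda>g. {0..bnd g R}))"
    by (simp add: compactin_PiE)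
  have cl: "closedin PT (Kd a r)"
  proof -
    have "Kd a r = A1 \<inter> {f. f [:-a, 1:] \<in> {..r}}" unfolding Kd_def by auto
    moreover have "closedin PT {f. f [:-a, 1:] \<in> {..r}}"
      using closedin_continuous_map_preimage[OF cm_proj[of "[:-a, 1:]"], of "{..r}"] by simp
    ultimately show ?thesis using closed_A1 by auto
  qed
  have "compactin PT (Kd a r)" by (rule closed_compactin[OF cbox sub cl])
  moreover have "Kd a r \<subseteq> A1" unfolding Kd_def by auto
  ultimately show ?thesis unfolding A1_top_eq by (simp add: compactin_subtopology)
qed

end


context cv begin

abbreviation "A1top \<equiv> berkA1_top absv"
abbreviation "P1 \<equiv> berkP1 absv"

lemma topspace_A1top[simp]: "topspace A1top = A1"
  unfolding A1_top_eq by simp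

lemma openin_A1_sub: "openin A1top U \<Longrightarrow> U \<subseteq> A1"
  using openin_subset by fastforce

lemma open_basic: "open U \<Longrightarrow> openin A1top {\<zeta> \<in> A1. \<zeta> g \<in> U}"
  unfolding berkA1_top_def by (rule topology_generated_by_Basis) blast

lemma istop_P1: "istopology (berkP1_open absv)"
  unfolding istopology_def
proof (intro conjI allI impI ballI)
  fix S T assume S: "berkP1_open absv S" and T: "berkP1_open absv T"
  show "berkP1_open absv (S \<inter> T)" unfolding berkP1_open_def
  proof (intro conjI impI)
    show "S \<inter> T \<subseteq> P1" using S unfolding berkP1_open_def by auto
    have "Some -` (S \<inter> T) = Some -` S \<inter> Some -` T" by auto
    then show "openin A1top (Some -` (S \<inter> T))" using S T unfolding berkP1_open_def by auto
    assume "None \<in> S \<inter> T"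
    then have "compactin A1top (A1 - Some -` S)" "compactin A1top (A1 - Some -` T)"
      using S T unfolding berkP1_open_def by auto
    then have "compactin A1top ((A1 - Some -` S) \<union> (A1 - Some -` T))" by (rule compactin_Un)
    moreover have "(A1 - Some -` S) \<union> (A1 - Some -` T) = A1 - Some -` (S \<inter> T)" by auto
    ultimately show "compactin A1top (A1 - Some -` (S \<inter> T))" by simp
  qed
next
  fix K assume K: "\<forall>S\<in>K. berkP1_open absv S"
  show "berkP1_open absv (\<Union>K)" unfolding berkP1_open_def
  proof (intro conjI impI)
    show "\<Union>K \<subseteq> P1" using K unfolding berkP1_open_def by auto
    have eq: "Some -` \<Union>K = \<Union>((\<lambda>S. Some -` S) ` K)" by auto
    show op: "openin A1top (Some -` \<Union>K)" unfolding eq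
      using K unfolding berkP1_open_def by (intro openin_Union) auto
    assume "None \<in> \<Union>K"
    then obtain S0 where S0: "S0 \<in> K" "None \<in> S0" by blast
    then have cS0: "compactin A1top (A1 - Some -` S0)" using K unfolding berkP1_open_def by auto
    have "closedin A1top (A1 - Some -` \<Union>K)"
      using op by (metis closedin_diff closedin_topspace topspace_A1top)
    moreover have "A1 - Some -` \<Union>K \<subseteq> A1 - Some -` S0" using S0 by auto
    ultimately show "compactin A1top (A1 - Some -` \<Union>K)" using closed_compactin[OF cS0] by blast
  qed
qed

definition topP1 :: "('a poly \<Rightarrow> real) option topology" where
  "topP1 = topology (berkP1_open absv)"

lemma openin_topP1: "openin topP1 = berkP1_open absv"
  unfolding topP1_def using istop_P1 by simp

lemma P1_open_P1: "berkP1_open absv P1"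
proof -
  have "Some -` P1 = A1" unfolding berkP1_def by auto
  then show ?thesis unfolding berkP1_open_def using openin_topspace[of A1top] by simp
qed

lemma topspace_topP1[simp]: "topspace topP1 = P1"
proof -
  have "P1 \<subseteq> topspace topP1" using P1_open_P1 openin_subset[of topP1 P1] openin_topP1 by simp
  moreover have "topspace topP1 \<subseteq> P1"
    unfolding topspace_def openin_topP1 berkP1_open_def by auto
  ultimately show ?thesis by blast
qed

lemma P1_open_Some: assumes "openin A1top S" shows "openin topP1 (Some ` S)"
  unfolding openin_topP1 berkP1_open_def
proof (intro conjI impI)
  show "Some ` S \<subseteq> P1" using openin_A1_sub[OF assms] unfolding berkP1_def by auto
  have "Some -` (Some ` S) = S" by auto
  then show "openin A1top (Some -` Some ` S)" using assms by simp
  assume "None \<in> Some ` S" then show "compactin A1top (A1 - Some -` Some ` S)" by auto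
qed

lemma P1_open_None: assumes "openin A1top S" "compactin A1top (A1 - S)"
  shows "openin topP1 (insert None (Some ` S))"
  unfolding openin_topP1 berkP1_open_def
proof (intro conjI impI)
  show "insert None (Some ` S) \<subseteq> P1" using openin_A1_sub[OF assms(1)] unfolding berkP1_def by auto
  have "Some -` insert None (Some ` S) = S" by auto
  then show "openin A1top (Some -` insert None (Some ` S))" using assms by simp
  show "compactin A1top (A1 - Some -` insert None (Some ` S))" using assms \<open>Some -` insert None (Some ` S) = S\<close> by simp
qed

lemma Kd0_eq: "{\<zeta> \<in> A1. \<zeta> X1 \<le> R} = Kd 0 R"
  unfolding Kd_def by simp

lemma Hausdorff_P1: "Hausdorff_space topP1"
  unfolding Hausdorff_space_def topspace_topP1
proof (intro allI impI)
  fix x y assume xy: "x \<in> P1 \<and> y \<in> P1 \<and> x \<noteq> y"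
  have sep_None: "\<exists>U V. openin topP1 U \<and> openin topP1 V \<and> Some \<zeta> \<in> U \<and> None \<in> V \<and> disjnt U V"
    if z: "\<zeta> \<in> A1" for \<zeta>
  proof -
    define R where "R = \<zeta> X1 + 1"
    let ?U = "Some ` {\<eta> \<in> A1. \<eta> X1 \<in> {..<R}}"
    let ?V = "insert None (Some ` {\<eta> \<in> A1. \<eta> X1 \<in> {R<..}})"
    have "openin topP1 ?U" by (intro P1_open_Some open_basic) simp
    moreover have "openin topP1 ?V"
    proof (rule P1_open_None)
      show "openin A1top {\<eta> \<in> A1. \<eta> X1 \<in> {R<..}}" by (intro open_basic) simp
      have "A1 - {\<eta> \<in> A1. \<eta> X1 \<in> {R<..}} = Kd 0 R" unfolding Kd0_eq[symmetric] by auto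
      then show "compactin A1top (A1 - {\<eta> \<in> A1. \<eta> X1 \<in> {R<..}})" using compact_Kd by simp
    qed
    moreover have "Some \<zeta> \<in> ?U" using z unfolding R_def by auto
    moreover have "disjnt ?U ?V" unfolding disjnt_def by auto
    ultimately show ?thesis by blast
  qed
  show "\<exists>U V. openin topP1 U \<and> openin topP1 V \<and> x \<in> U \<and> y \<in> V \<and> disjnt U V"
  proof (cases x)
    case None
    then obtain \<zeta> where y: "y = Some \<zeta>" "\<zeta> \<in> A1" using xy unfolding berkP1_def by auto
    obtain U V where "openin topP1 U \<and> openin topP1 V \<and> Some \<zeta> \<in> U \<and> None \<in> V \<and> disjnt U V"
      using sep_None[OF y(2)] by blast
    then show ?thesis using None y by (intro exI[of _ V] exI[of _ U]) (auto simp: disjnt_sym)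
  next
    case (Some \<zeta>)
    then have z: "\<zeta> \<in> A1" using xy unfolding berkP1_def by auto
    show ?thesis
    proof (cases y)
      case None
      then show ?thesis using sep_None[OF z] Some by auto
    next
      case (Some \<xi>)
      then have xi: "\<xi> \<in> A1" using xy unfolding berkP1_def by auto
      have "\<zeta> \<noteq> \<xi>" using xy \<open>x = Some \<zeta>\<close> Some by auto
      then obtain g where g: "\<zeta> g \<noteq> \<xi> g" by (meson ext)
      define m where "m = (\<zeta> g + \<xi> g) / 2"
      show ?thesis
      proof (cases "\<zeta> g < \<xi> g")
        case True
        let ?U = "Some ` {\<eta> \<in> A1. \<eta> g \<in> {..<m}}"
        let ?V = "Some ` {\<eta> \<in> A1. \<eta> g \<in> {m<..}}"
        have "openin topP1 ?U" "openin topP1 ?V" by (intro P1_open_Some open_basic; simp)+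
        moreover have "x \<in> ?U" "y \<in> ?V" using True z xi \<open>x = Some \<zeta>\<close> Some unfolding m_def by auto
        moreover have "disjnt ?U ?V" unfolding disjnt_def by auto
        ultimately show ?thesis by blast
      next
        case False
        then have F: "\<xi> g < \<zeta> g" using g by linarith
        let ?U = "Some ` {\<eta> \<in> A1. \<eta> g \<in> {m<..}}"
        let ?V = "Some ` {\<eta> \<in> A1. \<eta> g \<in> {..<m}}"
        have "openin topP1 ?U" "openin topP1 ?V" by (intro P1_open_Some open_basic; simp)+
        moreover have "x \<in> ?U" "y \<in> ?V" using F z xi \<open>x = Some \<zeta>\<close> Some unfolding m_def by auto
        moreover have "disjnt ?U ?V" unfolding disjnt_def by auto
        ultimately show ?thesis by blast
      qed
    qed
  qed
qed

definition Phi :: "('a poly \<Rightarrow> real) \<Rightarrow> ('a poly \<Rightarrow> real)" where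
  "Phi \<zeta> = (\<lambda>g. \<zeta> (hom_compose g Pc Qc) / \<zeta> Qc ^ degree g)"

lemma berk_map_Some: "\<zeta> Qc \<noteq> 0 \<Longrightarrow> berk_map absv Pc Qc (Some \<zeta>) = Some (Phi \<zeta>)"
  unfolding berk_map_def Phi_def by simp
lemma berk_map_Some0: "\<zeta> Qc = 0 \<Longrightarrow> berk_map absv Pc Qc (Some \<zeta>) = None"
  unfolding berk_map_def by simp

lemma poly_ext0: fixes p q :: "'a poly"
  assumes "\<And>a. a \<noteq> 0 \<Longrightarrow> poly p a = poly q a" shows "p = q"
proof (rule ccontr)
  assume "p \<noteq> q"
  then have "p - q \<noteq> 0" by simp
  then have fin: "finite {x. poly (p - q) x = 0}" by (rule poly_roots_finite)
  have "UNIV - {0} \<subseteq> {x. poly (p - q) x = 0}" using assms by auto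
  then have "finite (UNIV - {0::'a})" using fin finite_subset by blast
  then have "finite (UNIV :: 'a set)" by simp
  then show False using infinite_UNIV_char_0 by blast
qed

lemma hom_evalQ: "a \<noteq> 0 \<Longrightarrow> poly (hom_compose g Pc Qc) a = a ^ degree g * poly g (fm a)"
  using hom_eval[of Qc a g Pc] unfolding fm_def by simp

lemma hom_mult: assumes "g \<noteq> 0" "h \<noteq> 0"
  shows "hom_compose (g * h) Pc Qc = hom_compose g Pc Qc * hom_compose h Pc Qc"
proof (rule poly_ext0)
  fix a :: 'a assume a: "a \<noteq> 0"
  have "degree (g * h) = degree g + degree h" using assms by (rule degree_mult_eq)
  then show "poly (hom_compose (g * h) Pc Qc) a = poly (hom_compose g Pc Qc * hom_compose h Pc Qc) a"
    using a by (simp add: hom_evalQ power_add)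
qed

lemma hom_add: assumes "degree g \<le> d" "degree h \<le> d"
  shows "Qc ^ (d - degree (g + h)) * hom_compose (g + h) Pc Qc =
         Qc ^ (d - degree g) * hom_compose g Pc Qc + Qc ^ (d - degree h) * hom_compose h Pc Qc"
proof (rule poly_ext0)
  fix a :: 'a assume a: "a \<noteq> 0"
  have d3: "degree (g + h) \<le> d" using assms degree_add_le by blast
  have e: "a ^ (d - k) * a ^ k = a ^ d" if "k \<le> d" for k
    using that by (simp add: power_add[symmetric])
  have "poly (Qc ^ (d - degree (g + h)) * hom_compose (g + h) Pc Qc) a = a ^ d * poly (g + h) (fm a)"
    using a e[OF d3] by (simp add: hom_evalQ mult.assoc[symmetric])
  moreover have "poly (Qc ^ (d - degree g) * hom_compose g Pc Qc) a = a ^ d * poly g (fm a)"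
    using a e[OF assms(1)] by (simp add: hom_evalQ mult.assoc[symmetric])
  moreover have "poly (Qc ^ (d - degree h) * hom_compose h Pc Qc) a = a ^ d * poly h (fm a)"
    using a e[OF assms(2)] by (simp add: hom_evalQ mult.assoc[symmetric])
  ultimately show "poly (Qc ^ (d - degree (g + h)) * hom_compose (g + h) Pc Qc) a =
      poly (Qc ^ (d - degree g) * hom_compose g Pc Qc + Qc ^ (d - degree h) * hom_compose h Pc Qc) a"
    by (simp add: algebra_simps)
qed

lemma hom_const: "hom_compose [:a:] Pc Qc = [:a:]"
  unfolding hom_compose_def by simp

lemma hom_zero: "hom_compose 0 Pc Qc = 0"
  unfolding hom_compose_def by simp

lemma Phi_in: assumes z: "\<zeta> \<in> A1" and q: "\<zeta> Qc \<noteq> 0" shows "Phi \<zeta> \<in> A1"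
proof -
  have qp: "\<zeta> Qc > 0" using q sn_nonneg[OF z, of Qc] by linarith
  have c1: "\<forall>a. Phi \<zeta> [:a:] = absv a" unfolding Phi_def using sn_const[OF z] by (simp add: hom_const)
  have c2: "\<forall>p. 0 \<le> Phi \<zeta> p" unfolding Phi_def using sn_nonneg[OF z] qp by simp
  have c3: "\<forall>p r. Phi \<zeta> (p * r) = Phi \<zeta> p * Phi \<zeta> r"
  proof (intro allI)
    fix p r :: "'a poly"
    show "Phi \<zeta> (p * r) = Phi \<zeta> p * Phi \<zeta> r"
    proof (cases "p = 0 \<or> r = 0")
      case True then show ?thesis unfolding Phi_def using sn_0[OF z] by (auto simp: hom_zero)
    next
      case False
      then have "degree (p * r) = degree p + degree r" by (intro degree_mult_eq) auto
      then show ?thesis unfolding Phi_def using False by (simp add: hom_mult sn_mult[OF z] power_add)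
    qed
  qed
  have c4: "\<forall>p r. Phi \<zeta> (p + r) \<le> max (Phi \<zeta> p) (Phi \<zeta> r)"
  proof (intro allI)
    fix p r :: "'a poly"
    define d where "d = max (degree p) (degree r)"
    have dp: "degree p \<le> d" "degree r \<le> d" unfolding d_def by auto
    have d3: "degree (p + r) \<le> d" using dp degree_add_le by blast
    have key: "\<zeta> Qc ^ (d - degree k) * \<zeta> (hom_compose k Pc Qc) = \<zeta> Qc ^ d * Phi \<zeta> k"
      if "degree k \<le> d" for k
    proof -
      have "\<zeta> Qc ^ d = \<zeta> Qc ^ (d - degree k) * \<zeta> Qc ^ degree k"
        using that by (simp add: power_add[symmetric])
      then show ?thesis unfolding Phi_def using qp by (simp add: field_simps)
    qed
    have "\<zeta> Qc ^ d * Phi \<zeta> (p + r) = \<zeta> (Qc ^ (d - degree (p + r)) * hom_compose (p + r) Pc Qc)"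
      using key[OF d3] by (simp add: sn_mult[OF z] sn_power[OF z])
    also have "\<dots> = \<zeta> (Qc ^ (d - degree p) * hom_compose p Pc Qc + Qc ^ (d - degree r) * hom_compose r Pc Qc)"
      by (simp add: hom_add[OF dp])
    also have "\<dots> \<le> max (\<zeta> (Qc ^ (d - degree p) * hom_compose p Pc Qc)) (\<zeta> (Qc ^ (d - degree r) * hom_compose r Pc Qc))"
      by (rule sn_ultra[OF z])
    also have "\<dots> = max (\<zeta> Qc ^ d * Phi \<zeta> p) (\<zeta> Qc ^ d * Phi \<zeta> r)"
      using key[OF dp(1)] key[OF dp(2)] by (simp add: sn_mult[OF z] sn_power[OF z])
    also have "\<dots> = \<zeta> Qc ^ d * max (Phi \<zeta> p) (Phi \<zeta> r)"
      using qp by (simp add: max_mult_distrib_left)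
    finally show "Phi \<zeta> (p + r) \<le> max (Phi \<zeta> p) (Phi \<zeta> r)" using qp by simp
  qed
  show ?thesis unfolding berkA1_def berk_seminorm_def using c1 c2 c3 c4 by blast
qed

lemma berk_map_P1: "x \<in> P1 \<Longrightarrow> berk_map absv Pc Qc x \<in> P1"
proof -
  assume x: "x \<in> P1"
  show ?thesis
  proof (cases x)
    case None then show ?thesis by (simp add: berk_map_None berkP1_def)
  next
    case (Some \<zeta>)
    then have z: "\<zeta> \<in> A1" using x unfolding berkP1_def by auto
    show ?thesis
    proof (cases "\<zeta> Qc = 0")
      case True then show ?thesis using Some by (simp add: berk_map_Some0 berkP1_def)
    next
      case False then show ?thesis using Some Phi_in[OF z False] by (simp add: berk_map_Some berkP1_def)
    qed
  qed
qed

definition NZ :: "('a poly \<Rightarrow> real) set" where "NZ = {\<zeta> \<in> A1. \<zeta> Qc \<noteq> 0}"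

lemma NZ_open: "openin A1top NZ"
proof -
  have "NZ = {\<zeta> \<in> A1. \<zeta> Qc \<in> - {0}}" unfolding NZ_def by auto
  then show ?thesis using open_basic[of "- {0}" Qc] by (simp add: open_Compl)
qed

lemma Phi_cont: "continuous_map (subtopology A1top NZ) A1top Phi"
proof -
  have sub: "subtopology A1top NZ = subtopology PT NZ"
    unfolding A1_top_eq subtopology_subtopology NZ_def by (simp add: Int_absorb1 subset_iff)
  have "continuous_map (subtopology PT NZ) euclideanreal (\<lambda>\<zeta>. Phi \<zeta> g)" for g
    unfolding Phi_def
  proof (rule continuous_map_real_divide)
    show "continuous_map (subtopology PT NZ) euclideanreal (\<lambda>x. x (hom_compose g Pc Qc))"
      by (rule continuous_map_from_subtopology[OF cm_proj])
    show "continuous_map (subtopology PT NZ) euclideanreal (\<lambda>x. x Qc ^ degree g)"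
      by (intro continuous_map_real_pow continuous_map_from_subtopology[OF cm_proj])
    show "\<And>x. x \<in> topspace (subtopology PT NZ) \<Longrightarrow> x Qc ^ degree g \<noteq> 0" unfolding NZ_def by simp
  qed
  then have "continuous_map (subtopology PT NZ) PT Phi"
    by (simp add: continuous_map_componentwise_UNIV)
  moreover have "Phi ` topspace (subtopology PT NZ) \<subseteq> A1" using Phi_in unfolding NZ_def by auto
  ultimately have g: "continuous_map (subtopology PT NZ) (subtopology PT A1) Phi"
    by (simp add: continuous_map_in_subtopology image_subset_iff_funcset)
  show ?thesis unfolding sub unfolding A1_top_eq by (rule g)
qed

lemma Phi_preimage_open: assumes "openin A1top U" shows "openin A1top {\<zeta> \<in> NZ. Phi \<zeta> \<in> U}"
proof -
  have "openin (subtopology A1top NZ) {x \<in> topspace (subtopology A1top NZ). Phi x \<in> U}"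
    by (rule openin_continuous_map_preimage[OF Phi_cont assms])
  moreover have "topspace (subtopology A1top NZ) = NZ" unfolding NZ_def by auto
  ultimately show ?thesis using openin_trans_full NZ_open by fastforce
qed

lemma compact_bdd: assumes "compactin A1top C" shows "\<exists>B. \<forall>\<zeta>\<in>C. \<zeta> X1 \<le> B"
proof -
  have "continuous_map A1top euclideanreal (\<lambda>\<zeta>. \<zeta> X1)"
    unfolding A1_top_eq by (rule continuous_map_from_subtopology[OF cm_proj])
  from image_compactin[OF assms this] have "compact ((\<lambda>\<zeta>. \<zeta> X1) ` C)" by simp
  then have "bounded ((\<lambda>\<zeta>. \<zeta> X1) ` C)" by (rule compact_imp_bounded)
  then obtain a where "\<forall>x\<in>(\<lambda>\<zeta>. \<zeta> X1) ` C. \<bar>x\<bar> \<le> a" unfolding bounded_real by blast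
  then show ?thesis by (intro exI[of _ a]) auto
qed

lemma Pc_factor: "Pc = [:c, 1:] * [:1, 1:]"
  by (simp add: algebra_simps)

lemma sn_Pc_small: assumes z: "\<zeta> \<in> A1" and s: "\<zeta> X1 < absv c" shows "\<zeta> Pc = absv c"
proof -
  have "[:c, 1:] = X1 + [:c:]" by simp
  then have a: "\<zeta> [:c, 1:] = absv c" using sn_strict[OF z, of X1 "[:c:]"] s sn_const[OF z] by simp
  have "[:1, 1:] = X1 + [:1:]" by simp
  then have b: "\<zeta> [:1, 1:] = 1" using sn_strict[OF z, of X1 "[:1:]"] s c1 sn_const[OF z] by simp
  have "\<zeta> Pc = \<zeta> [:c, 1:] * \<zeta> [:1, 1:]" by (subst Pc_factor, rule sn_mult[OF z])
  then show ?thesis using a b by simp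
qed

lemma sn_Pc_large: assumes z: "\<zeta> \<in> A1" and s: "1 < \<zeta> X1" shows "\<zeta> Pc = \<zeta> X1 ^ 2"
proof -
  have "[:c, 1:] = [:c:] + X1" by simp
  then have a: "\<zeta> [:c, 1:] = \<zeta> X1" using sn_strict[OF z, of "[:c:]" X1] s c1 sn_const[OF z] by simp
  have "[:1, 1:] = [:1:] + X1" by simp
  then have b: "\<zeta> [:1, 1:] = \<zeta> X1" using sn_strict[OF z, of "[:1:]" X1] s sn_const[OF z] by simp
  have "\<zeta> Pc = \<zeta> [:c, 1:] * \<zeta> [:1, 1:]" by (subst Pc_factor, rule sn_mult[OF z])
  then show ?thesis using a b by (simp add: power2_eq_square)
qed

lemma hom_X1: "hom_compose X1 Pc Qc = Pc"
  unfolding hom_compose_def by (simp add: atMost_Suc)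

lemma Phi_X1: "Phi \<zeta> X1 = \<zeta> Pc / \<zeta> X1"
  unfolding Phi_def hom_X1 by simp

lemma F_cont: "continuous_map topP1 topP1 (berk_map absv Pc Qc)"
  unfolding continuous_map_def
proof (intro conjI allI impI)
  show "berk_map absv Pc Qc \<in> topspace topP1 \<rightarrow> topspace topP1" using berk_map_P1 by auto
  fix U assume U: "openin topP1 U"
  let ?F = "berk_map absv Pc Qc"
  let ?W = "{x \<in> topspace topP1. ?F x \<in> U}"
  let ?U' = "Some -` U"
  have U': "openin A1top ?U'" using U unfolding openin_topP1 berkP1_open_def by auto
  have U'A: "?U' \<subseteq> A1" using openin_A1_sub[OF U'] .
  have Wsub: "?W \<subseteq> P1" by simp
  have FS: "?F (Some \<zeta>) = (if \<zeta> Qc = 0 then None else Some (Phi \<zeta>))" for \<zeta>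
    using berk_map_Some berk_map_Some0 by simp
  have NW: "None \<in> ?W \<longleftrightarrow> None \<in> U" by (simp add: berk_map_None berkP1_def)
  have SW: "Some -` ?W = {\<zeta> \<in> A1. \<zeta> Qc = 0 \<and> None \<in> U} \<union> {\<zeta> \<in> NZ. Phi \<zeta> \<in> ?U'}"
    unfolding NZ_def using FS by (auto simp: berkP1_def)
  show "openin topP1 ?W" unfolding openin_topP1 berkP1_open_def
  proof (cases "None \<in> U")
    case False
    then have "Some -` ?W = {\<zeta> \<in> NZ. Phi \<zeta> \<in> ?U'}" using SW by simp
    then show "?W \<subseteq> P1 \<and> openin A1top (Some -` ?W) \<and> (None \<in> ?W \<longrightarrow> compactin A1top (A1 - Some -` ?W))"
      using Phi_preimage_open[OF U'] NW False by (simp add: berk_map_None)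
  next
    case True
    define C where "C = A1 - ?U'"
    have cC: "compactin A1top C" using U True unfolding openin_topP1 berkP1_open_def C_def by auto
    obtain B where B: "\<forall>\<xi>\<in>C. \<xi> X1 \<le> B" using compact_bdd[OF cC] by blast
    define E where "E = {\<zeta> \<in> NZ. Phi \<zeta> \<in> C}"
    have EA: "E \<subseteq> A1" unfolding E_def NZ_def by auto
    have SWE: "Some -` ?W = A1 - E"
      unfolding SW E_def C_def NZ_def using True Phi_in by auto
    define \<epsilon> where "\<epsilon> = absv c / (\<bar>B\<bar> + 1)"
    have \<epsilon>0: "0 < \<epsilon>" unfolding \<epsilon>_def using c0 by simp
    have \<epsilon>c: "\<epsilon> \<le> absv c" unfolding \<epsilon>_def using c0 by (simp add: divide_le_eq)
    have small: "\<zeta> \<notin> E" if z: "\<zeta> \<in> A1" "\<zeta> X1 < \<epsilon>" for \<zeta>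
    proof
      assume zE: "\<zeta> \<in> E"
      then have q: "\<zeta> X1 \<noteq> 0" unfolding E_def NZ_def by simp
      then have qp: "\<zeta> X1 > 0" using sn_nonneg[OF z(1), of X1] by linarith
      have "\<zeta> Pc = absv c" using sn_Pc_small[OF z(1)] z(2) \<epsilon>c by simp
      then have "Phi \<zeta> X1 = absv c / \<zeta> X1" by (simp add: Phi_X1)
      moreover have "absv c / \<zeta> X1 > \<bar>B\<bar> + 1"
        using z(2) qp c0 unfolding \<epsilon>_def by (simp add: field_simps)
      moreover have "Phi \<zeta> X1 \<le> B" using B zE unfolding E_def by simp
      ultimately show False by linarith
    qed
    have compl: "A1 - E = {\<zeta> \<in> A1. \<zeta> X1 \<in> {..<\<epsilon>}} \<union> {\<zeta> \<in> NZ. Phi \<zeta> \<in> ?U'}"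
    proof
      show "A1 - E \<subseteq> {\<zeta> \<in> A1. \<zeta> X1 \<in> {..<\<epsilon>}} \<union> {\<zeta> \<in> NZ. Phi \<zeta> \<in> ?U'}"
      proof
        fix \<zeta> assume z: "\<zeta> \<in> A1 - E"
        show "\<zeta> \<in> {\<zeta> \<in> A1. \<zeta> X1 \<in> {..<\<epsilon>}} \<union> {\<zeta> \<in> NZ. Phi \<zeta> \<in> ?U'}"
        proof (cases "\<zeta> Qc = 0")
          case True then show ?thesis using z \<epsilon>0 by simp
        next
          case False
          then have "Phi \<zeta> \<in> A1" using Phi_in z by simp
          then show ?thesis using z False unfolding E_def C_def NZ_def by auto
        qed
      qed
      show "{\<zeta> \<in> A1. \<zeta> X1 \<in> {..<\<epsilon>}} \<union> {\<zeta> \<in> NZ. Phi \<zeta> \<in> ?U'} \<subseteq> A1 - E"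
        using small unfolding E_def C_def NZ_def by auto
    qed
    have oc: "openin A1top (A1 - E)" unfolding compl
      by (intro openin_Un open_basic Phi_preimage_open[OF U']) simp
    have clE: "closedin A1top E" unfolding closedin_def using EA oc by simp
    have EK: "E \<subseteq> Kd 0 (max 1 B)"
    proof
      fix \<zeta> assume zE: "\<zeta> \<in> E"
      then have z: "\<zeta> \<in> A1" using EA by auto
      have "\<zeta> X1 \<le> max 1 B"
      proof (rule ccontr)
        assume "\<not> \<zeta> X1 \<le> max 1 B"
        then have g: "1 < \<zeta> X1" "B < \<zeta> X1" by auto
        have "Phi \<zeta> X1 = \<zeta> X1" using sn_Pc_large[OF z g(1)] g(1) by (simp add: Phi_X1 power2_eq_square)
        moreover have "Phi \<zeta> X1 \<le> B" using B zE unfolding E_def by simp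
        ultimately show False using g by simp
      qed
      then show "\<zeta> \<in> Kd 0 (max 1 B)" using z unfolding Kd_def by simp
    qed
    have cE: "compactin A1top E" by (rule closed_compactin[OF compact_Kd EK clE])
    show "?W \<subseteq> P1 \<and> openin A1top (Some -` ?W) \<and> (None \<in> ?W \<longrightarrow> compactin A1top (A1 - Some -` ?W))"
    proof (intro conjI impI)
      show "?W \<subseteq> P1" by (rule Wsub)
      show "openin A1top (Some -` ?W)" unfolding SWE by (rule oc)
      have "A1 - Some -` ?W = E" unfolding SWE using EA by auto
      then show "compactin A1top (A1 - Some -` ?W)" using cE by simp
    qed
  qed
qed

end


context cv begin

lemma factor_lin: "\<exists>xs. (g::'a poly) = smult (lead_coeff g) (prod_list (map (\<lambda>x. [:-x, 1:]) xs))"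
proof (induction "degree g" arbitrary: g)
  case 0
  obtain a where ga: "g = [:a:]" using degree_eq_zeroE[OF 0[symmetric]] by blast
  have "g = smult (lead_coeff g) (prod_list (map (\<lambda>x. [:-x, 1:]) []))" using ga by simp
  then show ?case by blast
next
  case (Suc n)
  then have dg: "0 < degree g" by simp
  obtain a where a: "poly g a = 0" using alg_closed'[OF dg] by blast
  define q where "q = synthetic_div g a"
  have gq: "g = [:-a, 1:] * q" using synthetic_div_correct'[of a g] a unfolding q_def by simp
  have dq: "n = degree q" using Suc(2) unfolding q_def by (simp add: degree_synthetic_div)
  obtain xs where xs: "q = smult (lead_coeff q) (prod_list (map (\<lambda>x. [:-x, 1:]) xs))" using Suc(1)[OF dq] by blast
  have "lead_coeff g = lead_coeff [:-a, 1:] * lead_coeff q" unfolding gq by (rule lead_coeff_mult)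
  then have lc: "lead_coeff g = lead_coeff q" by simp
  have "g = smult (lead_coeff g) (prod_list (map (\<lambda>x. [:-x, 1:]) (a # xs)))"
    by (subst gq, subst xs) (simp add: lc mult_smult_right)
  then show ?case by blast
qed

lemma av_prod_list: "absv (prod_list xs) = prod_list (map absv xs)"
  by (induction xs) auto

lemma sn_prod_list: "\<zeta> \<in> A1 \<Longrightarrow> \<zeta> (prod_list ps) = prod_list (map \<zeta> ps)"
  by (induction ps) (auto simp: sn_1 sn_mult)

lemma tendsto_prod_list_map: "(\<And>x. x \<in> set xs \<Longrightarrow> ((\<lambda>k. f k x) \<longlongrightarrow> L x) F) \<Longrightarrow>
   ((\<lambda>k. prod_list (map (f k) xs)) \<longlongrightarrow> prod_list (map L xs)) F"
  for f :: "_ \<Rightarrow> _ \<Rightarrow> real"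
  by (induction xs) (auto intro!: tendsto_mult)

lemma approx_pts: assumes z: "\<zeta> \<in> A1" and fin: "finite A" and d: "\<delta> > 0"
  shows "\<exists>a. \<forall>\<alpha>\<in>A. \<bar>absv (a - \<alpha>) - \<zeta> [:-\<alpha>, 1:]\<bar> < \<delta>"
proof -
  define \<delta>' where "\<delta>' = \<delta> / 2"
  have d': "\<delta>' > 0" unfolding \<delta>'_def using d by simp
  define S where "S = range (\<lambda>x. \<zeta> [:-x, 1:])"
  have Sne: "S \<noteq> {}" unfolding S_def by simp
  have Sb: "bdd_below S" unfolding S_def bdd_below_def using sn_nonneg[OF z] by blast
  define r where "r = Inf S"
  have rle: "r \<le> \<zeta> [:-x, 1:]" for x unfolding r_def using Sb by (intro cInf_lower) (auto simp: S_def)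
  have r0: "0 \<le> r" unfolding r_def using Sne sn_nonneg[OF z] by (intro cInf_greatest) (auto simp: S_def)
  obtain x0 where x0: "\<zeta> [:-x0, 1:] < r + \<delta>'"
    using cInf_lessD[OF Sne, of "r + \<delta>'"] d' unfolding r_def S_def by auto
  obtain \<tau> where \<tau>: "max (r - \<delta>') 0 < absv \<tau>" "absv \<tau> < r + \<delta>'"
    using value_dense[of "max (r - \<delta>') 0" "r + \<delta>'"] d' r0 by auto
  define s where "s = absv \<tau>"
  have s0: "0 < s" using \<tau> unfolding s_def by simp
  define B where "B = (\<lambda>\<alpha>. \<alpha> - x0) ` A"
  define Bl where "Bl = {n::nat. \<exists>\<beta>\<in>B. absv (of_nat n * \<tau> - \<beta>) < s}"
  have sub1: "finite {n::nat. n > 0 \<and> absv (of_nat n * \<tau> - \<beta>) < s}" for \<beta>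
  proof -
    have "m = n" if "m > 0 \<and> absv (of_nat m * \<tau> - \<beta>) < s" "n > 0 \<and> absv (of_nat n * \<tau> - \<beta>) < s" for m n :: nat
    proof (rule ccontr)
      assume mn: "m \<noteq> n"
      have h1: "absv (of_nat m * \<tau> - \<beta>) < s" using that by simp
      have h2: "absv (-(of_nat n * \<tau> - \<beta>)) < s" using that av_minus[of "of_nat n * \<tau> - \<beta>"] by linarith
      have "absv ((of_nat m * \<tau> - \<beta>) + (-(of_nat n * \<tau> - \<beta>))) < s" by (rule av_lt_of[OF h1 h2])
      then have "absv (of_nat m * \<tau> - of_nat n * \<tau>) < s" by simp
      moreover have "of_nat m * \<tau> - of_nat n * \<tau> = (of_nat m - of_nat n) * \<tau>" by (simp add: algebra_simps)
      moreover have "absv (of_nat m - of_nat n :: 'a) = 1"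
      proof (cases "m < n")
        case True
        then have eq: "(of_nat m - of_nat n :: 'a) = - of_nat (n - m)" by (simp add: of_nat_diff)
        have "absv (of_nat (n - m) :: 'a) = 1" using True by (intro av_of_nat) simp
        then show ?thesis unfolding eq av_minus .
      next
        case False
        then have eq: "(of_nat m - of_nat n :: 'a) = of_nat (m - n)" using mn by (simp add: of_nat_diff)
        have "absv (of_nat (m - n) :: 'a) = 1" using False mn by (intro av_of_nat) simp
        then show ?thesis unfolding eq .
      qed
      ultimately show False unfolding s_def by simp
    qed
    show ?thesis
    proof (cases "{n::nat. n > 0 \<and> absv (of_nat n * \<tau> - \<beta>) < s} = {}")
      case True then show ?thesis by (simp only: True finite.emptyI)
    next
      case False
      then obtain m where m: "m \<in> {n::nat. n > 0 \<and> absv (of_nat n * \<tau> - \<beta>) < s}" by blast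
      then have "{n::nat. n > 0 \<and> absv (of_nat n * \<tau> - \<beta>) < s} \<subseteq> {m}"
        using \<open>\<And>m n. _ \<Longrightarrow> _ \<Longrightarrow> m = n\<close> by blast
      then show ?thesis using finite_subset by blast
    qed
  qed
  have finBl: "finite {n \<in> Bl. n > 0}"
  proof -
    have "{n \<in> Bl. n > 0} = (\<Union>\<beta>\<in>B. {n::nat. n > 0 \<and> absv (of_nat n * \<tau> - \<beta>) < s})" unfolding Bl_def by auto
    then show ?thesis using sub1 fin unfolding B_def by simp
  qed
  obtain n where n: "n \<notin> {n \<in> Bl. n > 0}" "n > 0"
  proof -
    have "\<forall>m. \<exists>n::nat. m < n \<and> n \<in> {n::nat. n > 0}" by (intro allI, rule_tac x="Suc m" in exI) simp
    then have "infinite {n::nat. n > 0}" unfolding infinite_nat_iff_unbounded by simp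
    then have "infinite ({n::nat. n > 0} - {n \<in> Bl. n > 0})" using finBl by (rule Diff_infinite_finite[rotated])
    then have "{n::nat. n > 0} - {n \<in> Bl. n > 0} \<noteq> {}" by (rule infinite_imp_nonempty)
    then obtain n where "n \<in> {n::nat. n > 0} - {n \<in> Bl. n > 0}" by blast
    then show ?thesis using that by auto
  qed
  define t where "t = of_nat n * \<tau>"
  have ts: "absv t = s" unfolding t_def s_def using n(2) by simp
  have tb: "s \<le> absv (t - \<beta>)" if "\<beta> \<in> B" for \<beta>
    using n that unfolding Bl_def t_def by (auto simp: not_less)
  define a where "a = x0 + t"
  have za: "\<zeta> [:-a, 1:] < r + \<delta>'"
  proof -
    have e: "[:-a, 1:] = [:-x0, 1:] + [:-t:]" unfolding a_def by simp
    have "\<zeta> [:-a, 1:] \<le> max (\<zeta> [:-x0, 1:]) (\<zeta> [:-t:])" unfolding e by (rule sn_ultra[OF z])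
    then have "\<zeta> [:-a, 1:] \<le> max (\<zeta> [:-x0, 1:]) (absv t)" using sn_const[OF z, of "-t"] by simp
    then show ?thesis using x0 ts \<tau>(2) unfolding s_def by simp
  qed
  show ?thesis
  proof (intro exI[of _ a] ballI)
    fix \<alpha> assume \<alpha>: "\<alpha> \<in> A"
    let ?p = "\<zeta> [:-a, 1:]" and ?q = "\<zeta> [:-\<alpha>, 1:]" and ?u = "absv (a - \<alpha>)"
    have e1: "[:-\<alpha>, 1:] = [:-a, 1:] + [:a - \<alpha>:]" by simp
    have q_le: "?q \<le> max ?p ?u"
    proof -
      have "?q = \<zeta> ([:-a, 1:] + [:a - \<alpha>:])" by (simp only: e1[symmetric])
      also have "\<dots> \<le> max ?p (\<zeta> [:a - \<alpha>:])" by (rule sn_ultra[OF z])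
      finally show ?thesis using sn_const[OF z, of "a - \<alpha>"] by simp
    qed
    have e2: "[:a - \<alpha>:] = [:-\<alpha>, 1:] - [:-a, 1:]" by simp
    have u_le: "?u \<le> max ?q ?p"
    proof -
      have "?u = \<zeta> [:a - \<alpha>:]" using sn_const[OF z, of "a - \<alpha>"] by simp
      also have "\<dots> = \<zeta> ([:-\<alpha>, 1:] - [:-a, 1:])" by (simp only: e2)
      also have "\<dots> \<le> max ?q ?p" by (rule sn_diff[OF z])
      finally show ?thesis .
    qed
    have u_ge: "s \<le> ?u"
    proof -
      have eqa: "a - \<alpha> = t - (\<alpha> - x0)" unfolding a_def by simp
      have "\<alpha> - x0 \<in> B" unfolding B_def using \<alpha> by blast
      then have "s \<le> absv (t - (\<alpha> - x0))" by (rule tb)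
      then show ?thesis unfolding eqa .
    qed
    have q_ge: "r \<le> ?q" by (rule rle)
    show "\<bar>?u - ?q\<bar> < \<delta>"
    proof (cases "?p < ?q")
      case True
      then have "?u = ?q" using q_le u_le by linarith
      then show ?thesis using d by simp
    next
      case False
      then have "?q < r + \<delta>'" "?u < r + \<delta>'" using za u_le by auto
      moreover have "r - \<delta>' < s" using \<tau> unfolding s_def by simp
      ultimately show ?thesis using u_ge q_ge unfolding \<delta>'_def by linarith
    qed
  qed
qed

lemma box_nbhd: assumes U: "openin A1top U" and z: "\<zeta> \<in> U"
  shows "\<exists>V. finite {g. V g \<noteq> UNIV} \<and> (\<forall>g. open (V g)) \<and> (\<forall>g. \<zeta> g \<in> V g) \<and>
           (\<forall>\<xi>\<in>A1. (\<forall>g. \<xi> g \<in> V g) \<longrightarrow> \<xi> \<in> U)"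
proof -
  obtain W where W: "openin PT W" "U = W \<inter> A1" using U unfolding A1_top_eq openin_subtopology by blast
  then have "\<zeta> \<in> W" using z by simp
  then obtain V where V: "finite {i. V i \<noteq> topspace euclideanreal}" "\<forall>i. openin euclideanreal (V i)"
      "\<zeta> \<in> Pi\<^sub>E UNIV V" "Pi\<^sub>E UNIV V \<subseteq> W"
    using W(1) unfolding openin_product_topology_alt by auto
  have "\<forall>\<xi>\<in>A1. (\<forall>g. \<xi> g \<in> V g) \<longrightarrow> \<xi> \<in> U"
  proof (intro ballI impI)
    fix \<xi> assume "\<xi> \<in> A1" "\<forall>g. \<xi> g \<in> V g"
    then show "\<xi> \<in> U" using V(4) W(2) by (auto simp: PiE_iff)
  qed
  moreover have "\<forall>g. \<zeta> g \<in> V g" using V(3) by (simp add: PiE_iff)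
  ultimately show ?thesis using V(1,2) by (intro exI[of _ V]) auto
qed

lemma poly_lin_prod: "absv (poly (prod_list (map (\<lambda>x. [:-x, 1:]) xs)) a) = prod_list (map (\<lambda>x. absv (a - x)) xs)"
proof (induction xs)
  case (Cons y ys)
  have e: "poly (prod_list (map (\<lambda>x. [:-x, 1:]) (y # ys))) a = (a - y) * poly (prod_list (map (\<lambda>x. [:-x, 1:]) ys)) a"
    by (simp add: algebra_simps)
  show ?case unfolding e using Cons by simp
qed simp

lemma sn_lin_prod: assumes z: "\<zeta> \<in> A1"
  shows "\<zeta> (prod_list (map (\<lambda>x. [:-x, 1:]) xs)) = prod_list (map (\<lambda>x. \<zeta> [:-x, 1:]) xs)"
proof (induction xs)
  case Nil then show ?case using sn_1[OF z] by simp
next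
  case (Cons y ys)
  then show ?case by (simp only: list.map prod_list.Cons sn_mult[OF z])
qed

lemma approx_seq: assumes z: "\<zeta> \<in> A1" and G: "finite G"
  shows "\<exists>s. \<forall>g\<in>G. ((\<lambda>k. absv (poly g (s k))) \<longlongrightarrow> \<zeta> g) sequentially"
proof -
  define xs where "xs (g::'a poly) = (SOME xs. g = smult (lead_coeff g) (prod_list (map (\<lambda>x. [:-x, 1:]) xs)))" for g
  have xs: "g = smult (lead_coeff g) (prod_list (map (\<lambda>x. [:-x, 1:]) (xs g)))" for g
    unfolding xs_def by (rule someI_ex) (rule factor_lin)
  define A where "A = (\<Union>g\<in>G. set (xs g))"
  have finA: "finite A" unfolding A_def using G by simp
  define s where "s k = (SOME a. \<forall>\<alpha>\<in>A. \<bar>absv (a - \<alpha>) - \<zeta> [:-\<alpha>, 1:]\<bar> < 1 / real (Suc k))" for k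
  have sk: "\<forall>\<alpha>\<in>A. \<bar>absv (s k - \<alpha>) - \<zeta> [:-\<alpha>, 1:]\<bar> < 1 / real (Suc k)" for k
    unfolding s_def by (rule someI_ex[OF approx_pts[OF z finA]]) simp
  have lim: "((\<lambda>k. absv (s k - \<alpha>)) \<longlongrightarrow> \<zeta> [:-\<alpha>, 1:]) sequentially" if \<alpha>: "\<alpha> \<in> A" for \<alpha>
  proof (rule LIM_zero_cancel, rule Lim_null_comparison)
    show "\<forall>\<^sub>F k in sequentially. norm (absv (s k - \<alpha>) - \<zeta> [:-\<alpha>, 1:]) \<le> inverse (real (Suc k))"
      using sk \<alpha> by (intro always_eventually allI) (simp add: less_imp_le divide_inverse)
    show "((\<lambda>k. inverse (real (Suc k))) \<longlongrightarrow> 0) sequentially" by (rule LIMSEQ_inverse_real_of_nat)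
  qed
  have "((\<lambda>k. absv (poly g (s k))) \<longlongrightarrow> \<zeta> g) sequentially" if g: "g \<in> G" for g
  proof -
    have e1: "absv (poly g (s k)) = absv (lead_coeff g) * prod_list (map (\<lambda>x. absv (s k - x)) (xs g))" for k
      by (subst xs[of g]) (simp add: poly_lin_prod)
    have e2: "\<zeta> g = absv (lead_coeff g) * prod_list (map (\<lambda>x. \<zeta> [:-x, 1:]) (xs g))"
      by (subst xs[of g]) (simp add: sn_smult[OF z] sn_lin_prod[OF z])
    have "((\<lambda>k. prod_list (map (\<lambda>x. absv (s k - x)) (xs g))) \<longlongrightarrow> prod_list (map (\<lambda>x. \<zeta> [:-x, 1:]) (xs g))) sequentially"
      by (rule tendsto_prod_list_map) (use g lim in \<open>auto simp: A_def\<close>)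
    then show ?thesis unfolding e1 e2 by (rule tendsto_mult_left)
  qed
  then show ?thesis by blast
qed

lemma density: assumes U: "openin A1top U" and z: "\<zeta> \<in> U" shows "\<exists>a. typeI absv a \<in> U"
proof -
  obtain V where V: "finite {g. V g \<noteq> UNIV}" "\<forall>g. open (V g)" "\<forall>g. \<zeta> g \<in> V g"
      "\<forall>\<xi>\<in>A1. (\<forall>g. \<xi> g \<in> V g) \<longrightarrow> \<xi> \<in> U"
    using box_nbhd[OF U z] by blast
  have zA: "\<zeta> \<in> A1" using openin_A1_sub[OF U] z by auto
  obtain s where s: "\<forall>g\<in>{g. V g \<noteq> UNIV}. ((\<lambda>k. absv (poly g (s k))) \<longlongrightarrow> \<zeta> g) sequentially"
    using approx_seq[OF zA V(1)] by blast
  have "\<forall>g\<in>{g. V g \<noteq> UNIV}. eventually (\<lambda>k. absv (poly g (s k)) \<in> V g) sequentially"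
  proof
    fix g assume g: "g \<in> {g. V g \<noteq> UNIV}"
    have "((\<lambda>k. absv (poly g (s k))) \<longlongrightarrow> \<zeta> g) sequentially" using s g by blast
    then show "eventually (\<lambda>k. absv (poly g (s k)) \<in> V g) sequentially"
      by (rule topological_tendstoD) (use V(2,3) in auto)
  qed
  then have "eventually (\<lambda>k. \<forall>g\<in>{g. V g \<noteq> UNIV}. absv (poly g (s k)) \<in> V g) sequentially"
    by (rule eventually_ball_finite[OF V(1)])
  then obtain k where k: "\<forall>g\<in>{g. V g \<noteq> UNIV}. absv (poly g (s k)) \<in> V g"
    using eventually_sequentially by auto
  have "\<forall>g. typeI absv (s k) g \<in> V g"
  proof
    fix g show "typeI absv (s k) g \<in> V g" using k unfolding typeI_def by (cases "V g = UNIV") auto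
  qed
  then show ?thesis using V(4) typeI_in by blast
qed

lemma typeI_Kd: "typeI absv x \<in> Kd b r \<longleftrightarrow> absv (x - b) \<le> r"
  unfolding Kd_def typeI_def using typeI_in[of x] by (simp add: typeI_def add.commute)

lemma nbhd_disk: assumes U: "openin A1top U" and b: "typeI absv b \<in> U"
  shows "\<exists>r>0. r < absv c \<and> Kd b r \<subseteq> U"
proof -
  obtain V where V: "finite {g. V g \<noteq> UNIV}" "\<forall>g. open (V g)" "\<forall>g. typeI absv b g \<in> V g"
      "\<forall>\<xi>\<in>A1. (\<forall>g. \<xi> g \<in> V g) \<longrightarrow> \<xi> \<in> U"
    using box_nbhd[OF U b] by blast
  define R0 where "R0 = max 1 (absv b)"
  have one: "eventually (\<lambda>r. \<forall>\<xi>\<in>Kd b r. \<xi> g \<in> V g) (at_right 0)" for g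
  proof -
    define gb where "gb = poly g b"
    define h where "h = synthetic_div g b"
    have gh: "g = [:-b, 1:] * h + [:gb:]" unfolding h_def gb_def by (rule synthetic_div_correct'[symmetric])
    define C where "C = bnd h R0"
    have inV: "absv gb \<in> V g" using V(3) unfolding typeI_def gb_def by simp
    obtain \<epsilon> where \<epsilon>: "\<epsilon> > 0" "ball (absv gb) \<epsilon> \<subseteq> V g" using V(2) inV open_contains_ball by blast
    define \<eta> where "\<eta> = (if gb = 0 then \<epsilon> else absv gb)"
    have \<eta>0: "\<eta> > 0" unfolding \<eta>_def using \<epsilon> by simp
    have bound: "\<xi> ([:-b, 1:] * h) \<le> r * C" if xi: "\<xi> \<in> Kd b r" "r \<le> 1" for \<xi> r
    proof -
      have xA: "\<xi> \<in> A1" "\<xi> [:-b, 1:] \<le> r" using xi unfolding Kd_def by auto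
      have "\<xi> X1 \<le> R0" using sn_X1[OF xA(1), of b] xA(2) xi(2) unfolding R0_def by auto
      then have "\<xi> h \<le> C" unfolding C_def by (rule sn_bound[OF xA(1)])
      moreover have "\<xi> ([:-b, 1:] * h) = \<xi> [:-b, 1:] * \<xi> h" by (rule sn_mult[OF xA(1)])
      ultimately show ?thesis using xA(2) sn_nonneg[OF xA(1), of h] sn_nonneg[OF xA(1), of "[:-b, 1:]"]
        by (metis mult_mono order_trans)
    qed
    have C0: "0 \<le> C"
    proof -
      have "typeI absv b \<in> A1" by (rule typeI_in)
      moreover have "typeI absv b X1 \<le> R0" unfolding typeI_def R0_def by simp
      ultimately show ?thesis unfolding C_def using sn_bound sn_nonneg by (meson order.trans)
    qed
    show ?thesis unfolding eventually_at_right_field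
    proof (intro exI[of _ "min 1 (\<eta> / (C + 1))"] conjI allI impI ballI)
      show "0 < min 1 (\<eta> / (C + 1))" using \<eta>0 C0 by simp
      fix r \<xi> assume r: "0 < r" "r < min 1 (\<eta> / (C + 1))" and xi: "\<xi> \<in> Kd b r"
      have xA: "\<xi> \<in> A1" using xi unfolding Kd_def by auto
      have "r * C < \<eta>"
      proof -
        have "r * C \<le> r * (C + 1)" using r by simp
        also have "\<dots> < \<eta> / (C + 1) * (C + 1)" using r C0 by (intro mult_strict_right_mono) auto
        also have "\<dots> = \<eta>" using C0 by simp
        finally show ?thesis .
      qed
      then have lt: "\<xi> ([:-b, 1:] * h) < \<eta>" using bound[OF xi] r by linarith
      show "\<xi> g \<in> V g"
      proof (cases "gb = 0")
        case True
        then have "\<xi> g = \<xi> ([:-b, 1:] * h)" using gh by simp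
        then have "\<xi> g < \<epsilon>" using lt True unfolding \<eta>_def by simp
        moreover have "0 \<le> \<xi> g" by (rule sn_nonneg[OF xA])
        ultimately have "\<xi> g \<in> ball (absv gb) \<epsilon>" using True by (simp add: dist_real_def)
        then show ?thesis using \<epsilon> by blast
      next
        case False
        then have "\<xi> ([:-b, 1:] * h) < \<xi> [:gb:]" using lt sn_const[OF xA] unfolding \<eta>_def by simp
        then have "\<xi> ([:-b, 1:] * h + [:gb:]) = \<xi> [:gb:]" by (rule sn_strict[OF xA])
        then have "\<xi> g = absv gb" using gh sn_const[OF xA] by simp
        then show ?thesis using inV by simp
      qed
    qed
  qed
  have "eventually (\<lambda>r. \<forall>g\<in>{g. V g \<noteq> UNIV}. \<forall>\<xi>\<in>Kd b r. \<xi> g \<in> V g) (at_right 0)"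
    using one by (intro eventually_ball_finite[OF V(1)]) auto
  moreover have "eventually (\<lambda>r. r < absv c) (at_right (0::real))"
    unfolding eventually_at_right_field using c0 by (intro exI[of _ "absv c"]) auto
  ultimately have "eventually (\<lambda>r. r < absv c \<and> (\<forall>g\<in>{g. V g \<noteq> UNIV}. \<forall>\<xi>\<in>Kd b r. \<xi> g \<in> V g)) (at_right 0)"
    by (rule eventually_conj[rotated])
  then obtain bb where bb: "bb > 0" "\<forall>y>0. y < bb \<longrightarrow> y < absv c \<and> (\<forall>g\<in>{g. V g \<noteq> UNIV}. \<forall>\<xi>\<in>Kd b y. \<xi> g \<in> V g)"
    unfolding eventually_at_right_field by auto
  define r where "r = bb / 2"
  have r: "r > 0" "r < bb" unfolding r_def using bb by auto
  have P: "r < absv c" "\<forall>g\<in>{g. V g \<noteq> UNIV}. \<forall>\<xi>\<in>Kd b r. \<xi> g \<in> V g" using bb(2) r by auto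
  have "Kd b r \<subseteq> U"
  proof
    fix \<xi> assume xi: "\<xi> \<in> Kd b r"
    have "\<forall>g. \<xi> g \<in> V g"
    proof
      fix g show "\<xi> g \<in> V g" using P(2) xi by (cases "V g = UNIV") auto
    qed
    moreover have "\<xi> \<in> A1" using xi unfolding Kd_def by auto
    ultimately show "\<xi> \<in> U" using V(4) by blast
  qed
  then show ?thesis using r P by blast
qed

end


context cv begin

lemma pat_fac: "pat j * fac j = 1"
  unfolding pat_def fac_def using c0 by simp

lemma fac_pos: "0 < fac j" using fac_ge1[of j] by linarith

lemma S1: assumes x: "absv x = pat j" and r: "0 \<le> \<rho>" "\<rho> < pat j" and y: "absv (y - fm x) \<le> \<rho> * fac j"
  shows "\<exists>z. absv (z - x) \<le> \<rho> \<and> fm z = y \<and> z \<noteq> 0"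
proof -
  have x0: "x \<noteq> 0" using x pat_pos(1)[of j] by auto
  have A: "absv (x + c / x) = 1"
  proof (cases "ret j")
    case True
    then have ax: "absv x = absv c" using x unfolding pat_def by simp
    then have "absv (c / x) = 1" using c0 by simp
    moreover have "absv x < absv (c / x)" using ax c1 calculation by simp
    ultimately show ?thesis using av_strict[of x "c / x"] by simp
  next
    case False
    then have ax: "absv x = 1" using x unfolding pat_def by simp
    then have "absv (c / x) < absv x" using c1 by simp
    then show ?thesis using av_strict'[of "c / x" x] ax by simp
  qed
  have fx: "fm x - 1 - c = x + c / x" using fm_alt[OF x0] by simp
  have B: "absv (y - fm x) < 1"
  proof -
    have "\<rho> * fac j < pat j * fac j" using r fac_pos[of j] by (intro mult_strict_right_mono) auto
    then show ?thesis using y pat_fac[of j] by linarith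
  qed
  have eqy: "y - 1 - c = (fm x - 1 - c) + (y - fm x)" by simp
  have "absv ((fm x - 1 - c) + (y - fm x)) = absv (fm x - 1 - c)" by (rule av_strict') (use A B fx in simp)
  then have yc: "absv (y - 1 - c) = 1" unfolding eqy[symmetric] using A fx by simp
  obtain z1 z2 where z: "fm z1 = y" "fm z2 = y" "absv z1 = 1" "absv z2 = absv c" "z1 + z2 = y - 1 - c"
      "z1 \<noteq> 0" "z2 \<noteq> 0" "z1 * z2 = c"
    using roots_split[OF yc] by blast
  have key: "(x - z1) * (x - z2) = x * (fm x - y)"
  proof -
    have "(x - z1) * (x - z2) = x * x - (z1 + z2) * x + z1 * z2" by (simp add: algebra_simps)
    also have "\<dots> = x * x - (y - 1 - c) * x + c" using z(5,8) by simp
    also have "\<dots> = x * (fm x - y)" using fm_alt[OF x0] x0 by (simp add: field_simps)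
    finally show ?thesis .
  qed
  have prod: "absv (x - z1) * absv (x - z2) \<le> \<rho>"
  proof -
    have "absv (x - z1) * absv (x - z2) = absv x * absv (fm x - y)" using key by (metis av_mult)
    also have "\<dots> = pat j * absv (y - fm x)" using x av_commute_diff by simp
    also have "\<dots> \<le> pat j * (\<rho> * fac j)" using y pat_pos(1)[of j] by (intro mult_left_mono) auto
    also have "\<dots> = \<rho>" using pat_fac[of j] by (simp add: algebra_simps)
    finally show ?thesis .
  qed
  show ?thesis
  proof (cases "ret j")
    case True
    then have ax: "absv x = absv c" using x unfolding pat_def by simp
    have "absv (x - z1) = 1" using av_strict_diff'[of x z1] ax c1 z(3) by simp
    then have "absv (z2 - x) \<le> \<rho>" using prod av_commute_diff[of z2 x] by simp
    then show ?thesis using z by blast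
  next
    case False
    then have ax: "absv x = 1" using x unfolding pat_def by simp
    have "absv (x - z2) = 1" using av_strict_diff[of z2 x] ax c1 z(4) by simp
    then have "absv (z1 - x) \<le> \<rho>" using prod av_commute_diff[of z1 x] by simp
    then show ?thesis using z by blast
  qed
qed

lemma chain: assumes b: "\<forall>T. follows b T" and r: "0 < r"
  shows "(\<forall>i<n. r * DD i < pat i) \<Longrightarrow> absv (y - (fm ^^ n) b) \<le> r * DD n \<Longrightarrow>
    \<exists>z. absv (z - b) \<le> r \<and> (\<forall>j<n. (fm ^^ j) z \<noteq> 0) \<and> (fm ^^ n) z = y"
proof (induction n arbitrary: y)
  case 0 then show ?case by auto
next
  case (Suc n)
  define x where "x = (fm ^^ n) b"
  have "follows b (Suc n)" using b by simp
  then have x: "absv x = pat n" unfolding follows_def x_def by simp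
  have rho: "0 \<le> r * DD n" "r * DD n < pat n" using r DD_pos[of n] Suc.prems(1) by auto
  have "absv (y - fm x) \<le> r * DD n * fac n" using Suc.prems(2) unfolding x_def by (simp add: DD_Suc)
  from S1[OF x rho this] obtain z' where z': "absv (z' - x) \<le> r * DD n" "fm z' = y" "z' \<noteq> 0" by blast
  have "\<forall>i<n. r * DD i < pat i" using Suc.prems(1) by simp
  from Suc.IH[OF this] z'(1) obtain z where z: "absv (z - b) \<le> r" "\<forall>j<n. (fm ^^ j) z \<noteq> 0" "(fm ^^ n) z = z'"
    unfolding x_def by blast
  have "\<forall>j<Suc n. (fm ^^ j) z \<noteq> 0" using z(2,3) z'(3) by (auto simp: less_Suc_eq)
  moreover have "(fm ^^ Suc n) z = y" using z(3) z'(2) by simp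
  ultimately show ?case using z(1) by blast
qed

lemma M1_exists: assumes r: "0 < r"
  shows "\<exists>M. ret M \<and> absv c \<le> r * DD M \<and> (\<forall>i<M. r * DD i < pat i)"
proof -
  define Pm where "Pm m = (ret m \<and> absv c \<le> r * DD m)" for m
  obtain n0 where n0: "absv c / r < DD n0" using DD_unbounded by blast
  obtain m where m: "m > n0" "ret m" using ret_after by blast
  have "DD n0 \<le> DD m" using m by (intro DD_mono) simp
  then have "r * DD n0 \<le> r * DD m" using r by simp
  moreover have "absv c < r * DD n0" using n0 r by (simp add: field_simps)
  ultimately have "absv c \<le> r * DD m" by linarith
  then have ex: "\<exists>m. Pm m" using m unfolding Pm_def by blast
  define M where "M = (LEAST m. Pm m)"
  have PM: "Pm M" unfolding M_def by (rule LeastI_ex[OF ex])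
  have lt: "\<not> Pm i" if "i < M" for i unfolding M_def using not_less_Least that M_def by blast
  have "\<forall>i<M. r * DD i < pat i"
  proof (intro allI impI)
    fix i assume i: "i < M"
    show "r * DD i < pat i"
    proof (cases "ret i")
      case True then show ?thesis using lt[OF i] unfolding Pm_def pat_def by auto
    next
      case False
      then obtain p where p: "p < i" "ret p" "DD i = DD p / absv c" using nonret_prev by blast
      have "r * DD p < absv c" using lt[of p] p i unfolding Pm_def by auto
      have e: "r * DD i = (r * DD p) / absv c" using p(3) by simp
      have "(r * DD p) / absv c < 1" using \<open>r * DD p < absv c\<close> c0 by (simp add: divide_less_eq)
      then have "r * DD i < 1" using e by simp
      then show ?thesis using False unfolding pat_def by simp
    qed
  qed
  then show ?thesis using PM unfolding Pm_def by blast
qed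

lemma T1: assumes "absv (y + 1) < 1" shows "\<exists>z. z \<noteq> 0 \<and> absv z \<le> absv c \<and> fm z = y"
proof -
  have eq: "y - 1 - c = (y + 1 - c) - 2" by simp
  have l: "absv (y + 1 - c) < 1" using assms c1 av_diff[of "y + 1" c] by simp
  have "absv ((y + 1 - c) - 2) = absv (2::'a)" by (rule av_strict_diff') (use l in simp)
  then have "absv (y - 1 - c) = 1" unfolding eq by simp
  from roots_split[OF this] show ?thesis by auto
qed

lemma T2: assumes "absv y < 1" shows "\<exists>z. absv (z + 1) < 1 \<and> fm z = y"
proof -
  have eq: "y - 1 - c = (y - c) - 1" by simp
  have l: "absv (y - c) < 1" using assms c1 av_diff[of y c] by simp
  have "absv ((y - c) - 1) = absv (1::'a)" by (rule av_strict_diff') (use l in simp)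
  then have "absv (y - 1 - c) = 1" unfolding eq by simp
  from roots_split[OF this] obtain z1 z2 where z: "fm z1 = y" "absv z2 = absv c" "z1 + z2 = y - 1 - c" by blast
  have e: "z1 + 1 = (y - c) + (- z2)" using z(3) by (simp add: algebra_simps)
  have "absv ((y - c) + (- z2)) < 1" using l z(2) c1 by (intro av_lt_of) auto
  then have "absv (z1 + 1) < 1" unfolding e .
  then show ?thesis using z(1) by blast
qed

lemma coverage: assumes b: "\<forall>T. follows b T" and r: "0 < r"
  shows "\<exists>M\<ge>1. (\<forall>w. \<exists>x. absv (x - b) \<le> r \<and> (berk_map absv Pc Qc ^^ M) (Some (typeI absv x)) = Some (typeI absv w))
             \<and> (\<exists>x. absv (x - b) \<le> r \<and> (berk_map absv Pc Qc ^^ M) (Some (typeI absv x)) = None)"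
proof -
  obtain M1 where M1: "ret M1" "absv c \<le> r * DD M1" "\<forall>i<M1. r * DD i < pat i" using M1_exists[OF r] by blast
  have "follows b (Suc M1)" using b by simp
  then have u: "absv ((fm ^^ M1) b) = absv c" using M1(1) unfolding follows_def pat_def by simp
  have bk: "\<exists>x. absv (x - b) \<le> r \<and> (\<forall>j<M1. (fm ^^ j) x \<noteq> 0) \<and> (fm ^^ M1) x = z1"
    if "absv z1 \<le> absv c" for z1
  proof -
    have "absv (z1 - (fm ^^ M1) b) \<le> max (absv z1) (absv ((fm ^^ M1) b))" by (rule av_diff)
    also have "\<dots> \<le> r * DD M1" using that u M1(2) by simp
    finally show ?thesis using chain[OF b r M1(3)] by blast
  qed
  let ?F = "berk_map absv Pc Qc"
  have full: "(?F ^^ (M1 + 3)) (Some (typeI absv x)) = Some (typeI absv w)"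
    if x: "\<forall>j<M1. (fm ^^ j) x \<noteq> 0" "(fm ^^ M1) x = z1" "z1 \<noteq> 0" "fm z1 = z2" "z2 \<noteq> 0" "fm z2 = z3"
       "z3 \<noteq> 0" "fm z3 = w" for x z1 z2 z3 w
  proof -
    have f1: "(fm ^^ Suc M1) x = z2" using x by simp
    have f2: "(fm ^^ Suc (Suc M1)) x = z3" using x by simp
    have f3: "(fm ^^ (M1 + 3)) x = w" using x by (simp add: numeral_3_eq_3)
    have "\<forall>j<M1 + 3. (fm ^^ j) x \<noteq> 0"
    proof (intro allI impI)
      fix j assume "j < M1 + 3"
      then have "j < M1 \<or> j = M1 \<or> j = Suc M1 \<or> j = Suc (Suc M1)" by linarith
      then show "(fm ^^ j) x \<noteq> 0" using x f1 f2 by auto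
    qed
    then show ?thesis using berk_map_iter f3 by metis
  qed
  have cw: "\<exists>x. absv (x - b) \<le> r \<and> (?F ^^ (M1 + 3)) (Some (typeI absv x)) = Some (typeI absv w)" for w
  proof -
    obtain z3 where z3: "z3 \<noteq> 0" "absv z3 < 1" "fm z3 = w" using root_small by blast
    obtain z2 where z2: "absv (z2 + 1) < 1" "fm z2 = z3" using T2[OF z3(2)] by blast
    have z20: "z2 \<noteq> 0" using z2(1) by auto
    obtain z1 where z1: "z1 \<noteq> 0" "absv z1 \<le> absv c" "fm z1 = z2" using T1[OF z2(1)] by blast
    obtain x where x: "absv (x - b) \<le> r" "\<forall>j<M1. (fm ^^ j) x \<noteq> 0" "(fm ^^ M1) x = z1"
      using bk[OF z1(2)] by blast
    show ?thesis using full[OF x(2,3) z1(1) z1(3) z20 z2(2) z3(1) z3(3)] x(1) by blast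
  qed
  have cN: "\<exists>x. absv (x - b) \<le> r \<and> (?F ^^ (M1 + 3)) (Some (typeI absv x)) = None"
  proof -
    obtain z2 where z2: "absv (z2 + 1) < 1" "fm z2 = 0" using T2[of 0] by auto
    have z20: "z2 \<noteq> 0" using z2(1) by auto
    obtain z1 where z1: "z1 \<noteq> 0" "absv z1 \<le> absv c" "fm z1 = z2" using T1[OF z2(1)] by blast
    obtain x where x: "absv (x - b) \<le> r" "\<forall>j<M1. (fm ^^ j) x \<noteq> 0" "(fm ^^ M1) x = z1"
      using bk[OF z1(2)] by blast
    have f1: "(fm ^^ Suc M1) x = z2" using x z1 by simp
    have f2: "(fm ^^ Suc (Suc M1)) x = 0" using x z1 z2 by simp
    have "\<forall>j<Suc (Suc M1). (fm ^^ j) x \<noteq> 0"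
    proof (intro allI impI)
      fix j assume "j < Suc (Suc M1)"
      then have "j < M1 \<or> j = M1 \<or> j = Suc M1" by linarith
      then show "(fm ^^ j) x \<noteq> 0" using x f1 z1(1) z20 by auto
    qed
    then have "(?F ^^ Suc (Suc M1)) (Some (typeI absv x)) = Some (typeI absv 0)"
      using berk_map_iter f2 by metis
    then have "(?F ^^ (M1 + 3)) (Some (typeI absv x)) = None"
      by (simp add: numeral_3_eq_3 berk_map_typeI0)
    then show ?thesis using x(1) by blast
  qed
  show ?thesis using cw cN by (intro exI[of _ "M1 + 3"]) auto
qed

lemma Some_cont: "continuous_map A1top topP1 Some"
  unfolding continuous_map_def
proof (intro conjI allI impI)
  show "Some \<in> topspace A1top \<rightarrow> topspace topP1" by (auto simp: berkP1_def)
  fix U assume "openin topP1 U"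
  then have o: "openin A1top (Some -` U)" unfolding openin_topP1 berkP1_open_def by auto
  have "{x \<in> topspace A1top. Some x \<in> U} = Some -` U" using openin_A1_sub[OF o] by auto
  then show "openin A1top {x \<in> topspace A1top. Some x \<in> U}" using o by simp
qed

lemma F_iter_cont: "continuous_map topP1 topP1 (berk_map absv Pc Qc ^^ n)"
proof (induction n)
  case 0 then show ?case by (simp add: continuous_map_id[unfolded id_def])
next
  case (Suc n)
  have "berk_map absv Pc Qc ^^ Suc n = berk_map absv Pc Qc \<circ> (berk_map absv Pc Qc ^^ n)" by simp
  then show ?case using continuous_map_compose[OF Suc F_cont] by (simp add: comp_def)
qed

lemma julia_b: assumes b: "\<forall>T. follows b T"
  shows "Some (typeI absv b) \<in> berk_julia absv Pc Qc"
proof -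
  let ?F = "berk_map absv Pc Qc"
  have inP1: "Some (typeI absv b) \<in> P1" unfolding berkP1_def using typeI_in by auto
  have fin: "finite (P1 - (\<Union>n\<in>{1..}. (?F ^^ n) ` V))" if V: "berkP1_open absv V" "Some (typeI absv b) \<in> V" for V
  proof -
    have U: "openin A1top (Some -` V)" using V unfolding berkP1_open_def by auto
    have bU: "typeI absv b \<in> Some -` V" using V by simp
    obtain r where r: "r > 0" "r < absv c" "Kd b r \<subseteq> Some -` V" using nbhd_disk[OF U bU] by blast
    obtain M where M: "M \<ge> 1"
        "\<forall>w. \<exists>x. absv (x - b) \<le> r \<and> (?F ^^ M) (Some (typeI absv x)) = Some (typeI absv w)"
        "\<exists>x. absv (x - b) \<le> r \<and> (?F ^^ M) (Some (typeI absv x)) = None"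
      using coverage[OF b r(1)] by blast
    let ?K = "Some ` Kd b r"
    have cK: "compactin topP1 ?K" by (rule image_compactin[OF compact_Kd Some_cont])
    have cIm: "compactin topP1 ((?F ^^ M) ` ?K)" by (rule image_compactin[OF cK F_iter_cont])
    have clIm: "closedin topP1 ((?F ^^ M) ` ?K)" by (rule compactin_imp_closedin[OF Hausdorff_P1 cIm])
    have cov: "Some (typeI absv w) \<in> (?F ^^ M) ` ?K" for w
    proof -
      obtain x where x: "absv (x - b) \<le> r" "(?F ^^ M) (Some (typeI absv x)) = Some (typeI absv w)"
        using M(2) by blast
      have "typeI absv x \<in> Kd b r" using x(1) by (simp add: typeI_Kd)
      then have "Some (typeI absv x) \<in> ?K" by (rule imageI)
      then have "(?F ^^ M) (Some (typeI absv x)) \<in> (?F ^^ M) ` ?K" by (rule imageI)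
      then show ?thesis unfolding x(2) .
    qed
    have covN: "None \<in> (?F ^^ M) ` ?K"
    proof -
      obtain x where x: "absv (x - b) \<le> r" "(?F ^^ M) (Some (typeI absv x)) = None"
        using M(3) by blast
      have "typeI absv x \<in> Kd b r" using x(1) by (simp add: typeI_Kd)
      then have "Some (typeI absv x) \<in> ?K" by (rule imageI)
      then have "(?F ^^ M) (Some (typeI absv x)) \<in> (?F ^^ M) ` ?K" by (rule imageI)
      then show ?thesis unfolding x(2) .
    qed
    have all: "P1 \<subseteq> (?F ^^ M) ` ?K"
    proof
      fix y assume y: "y \<in> P1"
      show "y \<in> (?F ^^ M) ` ?K"
      proof (rule ccontr)
        assume ny: "y \<notin> (?F ^^ M) ` ?K"
        define Oo where "Oo = P1 - (?F ^^ M) ` ?K"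
        have oO: "openin topP1 Oo" using clIm unfolding closedin_def Oo_def by simp
        have yO: "y \<in> Oo" using y ny unfolding Oo_def by simp
        show False
        proof (cases y)
          case None then show False using ny covN by simp
        next
          case (Some \<zeta>)
          have "openin A1top (Some -` Oo)" using oO unfolding openin_topP1 berkP1_open_def by auto
          moreover have "\<zeta> \<in> Some -` Oo" using yO Some by simp
          ultimately obtain w where "typeI absv w \<in> Some -` Oo" using density by blast
          then have "Some (typeI absv w) \<in> Oo" by simp
          then show False using cov unfolding Oo_def by blast
        qed
      qed
    qed
    have KV: "?K \<subseteq> V"
    proof
      fix y assume "y \<in> ?K"
      then obtain \<xi> where xi: "\<xi> \<in> Kd b r" "y = Some \<xi>" by blast
      then have "\<xi> \<in> Some -` V" using r(3) by blast
      then show "y \<in> V" using xi(2) by simp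
    qed
    have M1: "M \<in> {1..}" using M(1) by simp
    have "(?F ^^ M) ` ?K \<subseteq> (?F ^^ M) ` V" using KV by (rule image_mono)
    also have "(?F ^^ M) ` V \<subseteq> (\<Union>n\<in>{1..}. (?F ^^ n) ` V)" using M1 by (rule UN_upper)
    finally have "P1 \<subseteq> (\<Union>n\<in>{1..}. (?F ^^ n) ` V)" using all by (rule order_trans[rotated])
    then have "P1 - (\<Union>n\<in>{1..}. (?F ^^ n) ` V) = {}" by (simp only: Diff_eq_empty_iff)
    then show ?thesis by (simp only: finite.emptyI)
  qed
  have nf: "\<not> (\<exists>V. berkP1_open absv V \<and> Some (typeI absv b) \<in> V \<and> infinite (P1 - (\<Union>n\<in>{1..}. (?F ^^ n) ` V)))"
  proof
    assume "\<exists>V. berkP1_open absv V \<and> Some (typeI absv b) \<in> V \<and> infinite (P1 - (\<Union>n\<in>{1..}. (?F ^^ n) ` V))"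
    then obtain V where V: "berkP1_open absv V" "Some (typeI absv b) \<in> V"
        "infinite (P1 - (\<Union>n\<in>{1..}. (?F ^^ n) ` V))" by blast
    show False using V(3) fin[OF V(1,2)] by simp
  qed
  show ?thesis unfolding berk_julia_def using inP1 nf by simp
qed

end

theorem mainTheorem17:
  fixes absv :: "'a::field_char_0 \<Rightarrow> real" and c :: 'a
  assumes "Cv_field absv"
    and "residue_char_zero absv"
    and "0 < absv c" and "absv c < 1"
  defines "P \<equiv> [:c, 1 + c, 1:]" and "Q \<equiv> [:0, 1:]"
  shows "\<exists>b::'a. Some (typeI absv b) \<in> berk_julia absv P Q \<and>
           (\<forall>n::nat. 1 \<le> n \<longrightarrow>
              sph_deriv absv (rat_map P Q ^^ n) (Some b) \<le> (1 / absv c) * real n)"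
proof -
  interpret cv absv c using assms(1-4) by (rule cv.intro)
  obtain b where b: "\<forall>T. follows b T" using exists_b by blast
  have "Some (typeI absv b) \<in> berk_julia absv P Q" unfolding P_def Q_def by (rule julia_b[OF b])
  moreover have "\<forall>n::nat. 1 \<le> n \<longrightarrow> sph_deriv absv (rat_map P Q ^^ n) (Some b) \<le> (1 / absv c) * real n"
  proof (intro allI impI)
    fix n :: nat assume n: "1 \<le> n"
    have "sph_deriv absv (rat_map P Q ^^ n) (Some b) = DD n" unfolding P_def Q_def by (rule sph_deriv_b[OF b])
    also have "\<dots> \<le> real n / absv c" by (rule DD_bound[OF n])
    finally show "sph_deriv absv (rat_map P Q ^^ n) (Some b) \<le> (1 / absv c) * real n" by simp
  qed
  ultimately show ?thesis by blast
qed

end
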